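(* Let $\lambda,\mu,\alpha>0$. For $x\in\mathbb{Z}^+$ let $\xi_x(t)$, $t\ge0$, denote the Poisson process with uniform catastrophes with parameters $\lambda,\mu,\alpha$ started from $\xi_x(0)=x$ (defined in the context). Then for any $x,y\in\mathbb{Z}^+$ there exist random processes $\tilde\xi(t)$ and $\hat\xi(t)$, $t\ge0$, defined on a common probability space, such that $\tilde\xi$ has the same distribution as $\xi_x$, $\hat\xi$ has the same distribution as $\xi_y$, and $$\mathbf{P}\Big(\sup_{t\ge0}|\tilde\xi(t)-\hat\xi(t)|\le|x-y|\Big)=1.$$
   Context: Let $\eta$ be a Markov chain on $\mathbb{Z}^+=\{0,1,2,\dots\}$ with transition probabilities $\mathbf{P}(\eta(n+1)=j\mid\eta(n)=i)=\frac{\lambda}{\lambda+\mu}$ if $j=i+1$ (and $i\ge1$), $=\frac{\mu}{i(\lambda+\mu)}$ if $0\le j<i$, $i\neq0$, and $=1$ if $i=0$, $j=1$. Let $\nu(t)$ be a Poisson process of rate $\alpha$ independent of $\eta$. The process $\xi_x(t):=\eta(\nu(t))$ where $\eta(0)=x$ is the Poisson process with uniform catastrophes started at $x$ (equivalently, a continuous-time Markov chain which at rate $\alpha$ makes a step of the chain $\eta$). *)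

theory Defs
  imports "HOL-Probability.Probability"
begin

definition ucat_kernel :: "real \<Rightarrow> real \<Rightarrow> nat \<Rightarrow> nat \<Rightarrow> real" where
  "ucat_kernel lam mu i j =
     (if i = 0 then (if j = 1 then 1 else 0)
      else if j = i + 1 then lam / (lam + mu)
      else if j < i then mu / (real i * (lam + mu))
      else 0)"

text \<open>n-step transition probabilities of eta (a step from i only reaches states \<le> i+1).\<close>
fun ucat_kernel_pow :: "real \<Rightarrow> real \<Rightarrow> nat \<Rightarrow> nat \<Rightarrow> nat \<Rightarrow> real" where
  "ucat_kernel_pow lam mu 0 i j = (if i = j then 1 else 0)"
| "ucat_kernel_pow lam mu (Suc n) i j =
     (\<Sum>k\<le>i+1. ucat_kernel lam mu i k * ucat_kernel_pow lam mu n k j)"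

text \<open>Transition probabilities of xi(t) = eta(nu(t)), nu a Poisson process of rate alpha:
  P_t(i,j) = sum_n e^{-alpha t} (alpha t)^n / n! * K^n(i,j).\<close>
definition ucat_trans :: "real \<Rightarrow> real \<Rightarrow> real \<Rightarrow> real \<Rightarrow> nat \<Rightarrow> nat \<Rightarrow> real" where
  "ucat_trans lam mu alpha t i j =
     (\<Sum>n. exp (- alpha * t) * (alpha * t) ^ n / fact n * ucat_kernel_pow lam mu n i j)"

text \<open>X (on the probability space M) has the same distribution as the Poisson process with
  uniform catastrophes started at x: every X t (t \<ge> 0) is a random variable, and all
  finite-dimensional distributions agree with those of xi_x (which determine the law
  on the product sigma-algebra of paths).\<close>
definition ucat_process ::
  "real \<Rightarrow> real \<Rightarrow> real \<Rightarrow> nat \<Rightarrow> 'a measure \<Rightarrow> (real \<Rightarrow> 'a \<Rightarrow> nat) \<Rightarrow> bool" where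
  "ucat_process lam mu alpha x M X \<longleftrightarrow>
     (\<forall>t\<ge>0. X t \<in> measurable M (count_space UNIV)) \<and>
     (\<forall>(n::nat) (ts::nat \<Rightarrow> real) (ks::nat \<Rightarrow> nat).
        (0 < n \<longrightarrow> 0 \<le> ts 0) \<and> (\<forall>i. Suc i < n \<longrightarrow> ts i \<le> ts (Suc i)) \<longrightarrow>
        measure M {\<omega> \<in> space M. \<forall>i<n. X (ts i) \<omega> = ks i} =
          (\<Prod>i<n. ucat_trans lam mu alpha
                     (ts i - (if i = 0 then 0 else ts (i - 1)))
                     (if i = 0 then x else ks (i - 1)) (ks i)))"

end

theory Submission
  imports Defs
begin

definition posf :: "real \<Rightarrow> real" where
  "posf v = (if 0 < v \<and> v < 1 then v else 1/2)"

definition Uni :: "real measure" where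
  "Uni = uniform_measure lborel {0<..<1}"

definition stp :: "real \<Rightarrow> real \<Rightarrow> nat \<Rightarrow> real \<Rightarrow> nat" where
  "stp lam mu i v = (let q = lam / (lam + mu); w = posf v in
     if i = 0 then 1 else if w < q then i + 1 else nat \<lfloor>(w - q) / (1 - q) * real i\<rfloor>)"

primrec eta :: "real \<Rightarrow> real \<Rightarrow> nat \<Rightarrow> (nat \<Rightarrow> real) \<Rightarrow> nat \<Rightarrow> nat" where
  "eta lam mu x a 0 = x"
| "eta lam mu x a (Suc n) = stp lam mu (eta lam mu x a n) (a n)"

lemma posf_bounds: "0 < posf v" "posf v < 1"
  by (auto simp: posf_def)

lemma sets_Uni[simp, measurable_cong]: "sets Uni = sets borel"
  by (simp add: Uni_def)

lemma space_Uni[simp]: "space Uni = UNIV"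
  by (simp add: Uni_def)

lemma prob_space_Uni: "prob_space Uni"
  unfolding Uni_def by (rule prob_space_uniform_measure) auto

lemma posf_measurable[measurable]: "posf \<in> borel_measurable borel"
  unfolding posf_def by measurable

lemma stp_measurable[measurable]: "stp lam mu i \<in> measurable borel (count_space UNIV)"
  unfolding stp_def Let_def
  by measurable

lemma floor_diff_le:
  fixes w :: real and i j :: nat
  assumes "0 \<le> w" "w < 1"
  shows "\<bar>int (nat \<lfloor>w * real i\<rfloor>) - int (nat \<lfloor>w * real j\<rfloor>)\<bar> \<le> \<bar>int i - int j\<bar>"
proof -
  have a: "\<lfloor>w * real i\<rfloor> \<ge> 0" "\<lfloor>w * real j\<rfloor> \<ge> 0" using assms by auto
  have "\<bar>w * real i - w * real j\<bar> \<le> \<bar>real i - real j\<bar>"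
  proof -
    have "\<bar>w * real i - w * real j\<bar> = w * \<bar>real i - real j\<bar>"
      using assms by (simp add: abs_mult right_diff_distrib[symmetric])
    also have "\<dots> \<le> \<bar>real i - real j\<bar>" using assms by (simp add: mult_left_le_one_le)
    finally show ?thesis .
  qed
  moreover have "\<bar>real_of_int \<lfloor>w * real i\<rfloor> - real_of_int \<lfloor>w * real j\<rfloor>\<bar> < \<bar>w * real i - w * real j\<bar> + 1"
    by linarith
  ultimately have "\<bar>real_of_int (\<lfloor>w * real i\<rfloor> - \<lfloor>w * real j\<rfloor>)\<bar> < real_of_int (\<bar>int i - int j\<bar> + 1)"
    by simp
  then have "\<bar>\<lfloor>w * real i\<rfloor> - \<lfloor>w * real j\<rfloor>\<bar> < \<bar>int i - int j\<bar> + 1"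
    by linarith
  then show ?thesis using a by simp
qed

lemma stp_coupling:
  assumes "lam > 0" "mu > 0"
  shows "\<bar>int (stp lam mu i v) - int (stp lam mu j v)\<bar> \<le> \<bar>int i - int j\<bar>"
proof -
  define q where "q = lam / (lam + mu)"
  define w where "w = posf v"
  have q: "0 < q" "q < 1" using assms by (auto simp: q_def field_simps)
  have w: "0 < w" "w < 1" using posf_bounds by (auto simp: w_def)
  define z where "z = (w - q) / (1 - q)"
  have z: "q \<le> w \<Longrightarrow> 0 \<le> z \<and> z < 1" using q w by (auto simp: z_def field_simps)
  have fl: "q \<le> w \<Longrightarrow> k > 0 \<Longrightarrow> nat \<lfloor>z * real k\<rfloor> \<le> k - 1" for k :: nat
  proof -
    assume "q \<le> w" "k > 0"
    then have "z * real k < real k" using z by (simp add: mult_less_cancel_right2)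
    then have "\<lfloor>z * real k\<rfloor> < int k" by linarith
    then show ?thesis by linarith
  qed
  have fl2: "q \<le> w \<Longrightarrow> k > 0 \<Longrightarrow> 0 \<le> \<lfloor>z * real k\<rfloor> \<and> \<lfloor>z * real k\<rfloor> \<le> int k - 1" for k :: nat
  proof -
    assume "q \<le> w" "k > 0"
    then have "z * real k < real k" "0 \<le> z * real k" using z by (simp_all add: mult_less_cancel_right2)
    then show ?thesis by linarith
  qed
  have S: "stp lam mu k v = (if k = 0 then 1 else if w < q then k + 1 else nat \<lfloor>z * real k\<rfloor>)" for k
    by (simp add: stp_def q_def w_def z_def Let_def)
  show ?thesis
  proof (cases "i = 0 \<or> j = 0")
    case True
    then show ?thesis
    proof
      assume i0: "i = 0"
      show ?thesis
      proof (cases "j = 0")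
        case False
        then show ?thesis
        proof (cases "w < q")
          case False
          obtain f where f: "f = \<lfloor>z * real j\<rfloor>" by simp
          have "0 \<le> f \<and> f \<le> int j - 1" unfolding f using fl2[of j] \<open>j \<noteq> 0\<close> False by simp
          moreover have "stp lam mu j v = nat f" using False \<open>j \<noteq> 0\<close> by (simp add: S f)
          ultimately show ?thesis using i0 \<open>j \<noteq> 0\<close> by (auto simp add: S abs_if)
        qed (simp add: S i0)
      qed (simp add: i0)
    next
      assume j0: "j = 0"
      show ?thesis
      proof (cases "i = 0")
        case False
        then show ?thesis
        proof (cases "w < q")
          case False
          obtain f where f: "f = \<lfloor>z * real i\<rfloor>" by simp
          have "0 \<le> f \<and> f \<le> int i - 1" unfolding f using fl2[of i] \<open>i \<noteq> 0\<close> False by simp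
          moreover have "stp lam mu i v = nat f" using False \<open>i \<noteq> 0\<close> by (simp add: S f)
          ultimately show ?thesis using j0 \<open>i \<noteq> 0\<close> by (auto simp add: S abs_if)
        qed (simp add: S j0)
      qed (simp add: j0)
    qed
  next
    case False
    then show ?thesis using floor_diff_le[of z i j] z by (auto simp: S)
  qed
qed

lemma eta_coupling:
  assumes "lam > 0" "mu > 0"
  shows "\<bar>int (eta lam mu x a n) - int (eta lam mu y a n)\<bar> \<le> \<bar>int x - int y\<bar>"
  by (induction n) (auto intro: order_trans[OF stp_coupling[OF assms]])

lemma ennreal_div1: "(x::ennreal) / 1 = x" using ennreal_divide_times[of x 1 1] ennreal_divide_self[of 1] by simp

lemma emeasure_Uni: "B \<in> sets borel \<Longrightarrow> emeasure Uni B = emeasure lborel ({0<..<1} \<inter> B)"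
  unfolding Uni_def by (subst emeasure_uniform_measure) (auto simp: ennreal_div1)

lemma Uni_UNIV[simp]: "emeasure Uni UNIV = 1"
  using prob_space.emeasure_space_1[OF prob_space_Uni] by simp

lemma kernel_nonneg: "lam > 0 \<Longrightarrow> mu > 0 \<Longrightarrow> 0 \<le> ucat_kernel lam mu i j"
  by (auto simp: ucat_kernel_def)

lemma Uni_stp:
  assumes lm: "lam > 0" "mu > 0"
  shows "emeasure Uni {v. stp lam mu i v = j} = ennreal (ucat_kernel lam mu i j)"
proof -
  define q where "q = lam / (lam + mu)"
  have q: "0 < q" "q < 1" using assms by (auto simp: q_def field_simps)
  have meas: "{v. stp lam mu i v = j} \<in> sets borel" by measurable
  have E: "emeasure Uni {v. stp lam mu i v = j} = emeasure lborel ({0<..<1} \<inter> {v. stp lam mu i v = j})"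
    using meas by (rule emeasure_Uni)
  show ?thesis
  proof (cases "i = 0")
    case True
    then show ?thesis
      by (cases "j = 1") (auto simp: E stp_def ucat_kernel_def)
  next
    case i: False
    have S: "v \<in> {0<..<1} \<Longrightarrow> stp lam mu i v = (if v < q then i + 1 else nat \<lfloor>(v - q) / (1 - q) * real i\<rfloor>)" for v
      using i by (simp add: stp_def posf_def q_def Let_def)
    have lt: "q \<le> v \<Longrightarrow> v < 1 \<Longrightarrow> nat \<lfloor>(v - q) / (1 - q) * real i\<rfloor> < i" for v
    proof -
      assume "q \<le> v" "v < 1"
      then have "(v - q) / (1 - q) < 1" "0 \<le> (v - q) / (1 - q)" using q by (auto simp: field_simps)
      then have "(v - q) / (1 - q) * real i < 1 * real i" using i by (intro mult_strict_right_mono) auto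
      then show ?thesis using i by linarith
    qed
    show ?thesis
    proof (cases "j = i + 1")
      case True
      have "{0<..<1} \<inter> {v. stp lam mu i v = j} = {0<..<q}"
      proof (intro set_eqI iffI)
        fix v assume v: "v \<in> {0<..<1} \<inter> {v. stp lam mu i v = j}"
        show "v \<in> {0<..<q}"
        proof (cases "v < q")
          case False then show ?thesis using v S[of v] lt[of v] True by auto
        qed (use v in auto)
      next
        fix v assume "v \<in> {0<..<q}" then show "v \<in> {0<..<1} \<inter> {v. stp lam mu i v = j}"
          using q S[of v] True by auto
      qed
      then show ?thesis using True i q by (subst E) (simp add: ucat_kernel_def q_def)
    next
      case ji: False
      show ?thesis
      proof (cases "j < i")
        case False
        have "{0<..<1} \<inter> {v. stp lam mu i v = j} = {}"
      proof -
        have "stp lam mu i v \<noteq> j" if "v \<in> {0<..<1}" for v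
          using that S[of v] lt[of v] False ji by (auto split: if_splits)
        then show ?thesis by blast
      qed
        then show ?thesis using False ji i by (subst E) (simp add: ucat_kernel_def)
      next
        case True
        define a where "a = q + (1 - q) * real j / real i"
        define b where "b = q + (1 - q) * real (Suc j) / real i"
        have ip: "real i > 0" using i by simp
        have h1: "(1 - q) * (real j + 1) \<le> (1 - q) * real i" using q True by (intro mult_left_mono) auto
        have ab: "q \<le> a" "a \<le> b" "b \<le> 1"
        proof -
          show "q \<le> a" using q ip by (simp add: a_def)
          show "a \<le> b" using q ip by (simp add: a_def b_def divide_right_mono)
          have "(1 - q) * real (Suc j) / real i \<le> (1 - q)" using h1 ip by (simp add: field_simps)
          then show "b \<le> 1" by (simp add: b_def)
        qed
        have "{0<..<1} \<inter> {v. stp lam mu i v = j} = {a..<b}"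
        proof (intro set_eqI iffI)
          fix v assume v: "v \<in> {0<..<1} \<inter> {v. stp lam mu i v = j}"
          then have v01: "0 < v" "v < 1" by auto
          have "\<not> v < q"
          proof
            assume "v < q" then have "stp lam mu i v = i + 1" using v01 S by auto
            then show False using v True by auto
          qed
          then have fl: "nat \<lfloor>(v - q) / (1 - q) * real i\<rfloor> = j" using v S by auto
          have nn: "0 \<le> (v - q) / (1 - q) * real i" using \<open>\<not> v < q\<close> q by auto
          then have "real j \<le> (v - q) / (1 - q) * real i" "(v - q) / (1 - q) * real i < real j + 1"
            using fl by linarith+
          then show "v \<in> {a..<b}" using q i
            by (auto simp: a_def b_def field_simps)
        next
          fix v assume v: "v \<in> {a..<b}"
          then have "a \<le> v" "v < b" by auto
          then have h: "real j \<le> (v - q) / (1 - q) * real i" "(v - q) / (1 - q) * real i < real j + 1"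
            using q i by (auto simp: a_def b_def field_simps)
          have v01: "0 < v" "v < 1" "\<not> v < q" using v ab q by auto
          have "nat \<lfloor>(v - q) / (1 - q) * real i\<rfloor> = j" using h by linarith
          then show "v \<in> {0<..<1} \<inter> {v. stp lam mu i v = j}" using v01 S by auto
        qed
        moreover have "b - a = mu / (real i * (lam + mu))"
        proof -
          have "1 - q = mu / (lam + mu)" using lm by (simp add: q_def field_simps)
          moreover have "b - a = (1 - q) / real i" by (simp add: a_def b_def diff_divide_distrib[symmetric] algebra_simps)
          ultimately show ?thesis by simp
        qed
        ultimately show ?thesis using True ji i ab by (subst E) (simp add: ucat_kernel_def)
      qed
    qed
  qed
qed

abbreviation Mc :: "(nat \<Rightarrow> real) measure" where
  "Mc \<equiv> PiM UNIV (\<lambda>_::nat. Uni)"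

lemma seq_Uni: "sequence_space Uni"
  by (simp add: sequence_space_def product_prob_space_def prob_space_Uni product_sigma_finite_def
      prob_space_imp_sigma_finite product_prob_space_axioms_def)

lemma space_Mc[simp]: "space Mc = UNIV"
  by (simp add: space_PiM PiE_UNIV_domain)

lemma prob_space_Mc: "prob_space Mc"
  by (intro prob_space_PiM prob_space_Uni)

lemma Mc_UNIV[simp]: "emeasure Mc UNIV = 1"
  using prob_space.emeasure_space_1[OF prob_space_Mc] by simp

lemma sets_Mc_Collect: "{a \<in> space Mc. P a} \<in> sets Mc \<Longrightarrow> {a. P a} \<in> sets Mc"
  by simp

lemma eta_meas[measurable]: "(\<lambda>a. eta lam mu x a n) \<in> measurable Mc (count_space UNIV)"
proof (induction n)
  case (Suc n)
  have "(\<lambda>a. stp lam mu (eta lam mu x a n) (a n)) \<in> measurable Mc (count_space UNIV)"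
    by (rule measurable_compose_countable'[where I=UNIV, OF _ Suc]) auto
  then show ?case by simp
qed simp

lemma stp_le: "lam > 0 \<Longrightarrow> mu > 0 \<Longrightarrow> stp lam mu i v \<le> i + 1"
proof -
  assume lm: "lam > 0" "mu > 0"
  define q where "q = lam / (lam + mu)"
  have q: "0 < q" "q < 1" using lm by (auto simp: q_def field_simps)
  define w where "w = posf v"
  have w: "0 < w" "w < 1" using posf_bounds by (auto simp: w_def)
  have "nat \<lfloor>(w - q) / (1 - q) * real i\<rfloor> \<le> i + 1" if "q \<le> w"
  proof -
    have "(w - q) / (1 - q) \<le> 1" using q w by (auto simp: field_simps)
    then have "(w - q) / (1 - q) * real i \<le> 1 * real i" by (intro mult_right_mono) auto
    then show ?thesis by linarith
  qed
  then show ?thesis by (auto simp: stp_def Let_def q_def[symmetric] w_def[symmetric])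
qed

lemma kpow_nonneg: "lam > 0 \<Longrightarrow> mu > 0 \<Longrightarrow> 0 \<le> ucat_kernel_pow lam mu n i j"
proof (induction n arbitrary: i)
  case (Suc n)
  then show ?case unfolding ucat_kernel_pow.simps
    by (intro sum_nonneg mult_nonneg_nonneg kernel_nonneg) auto
qed simp

lemma integral_stp:
  assumes lm: "lam > 0" "mu > 0"
  shows "(\<integral>\<^sup>+ s. g (stp lam mu i s) \<partial>Uni) = (\<Sum>k\<le>i+1. ennreal (ucat_kernel lam mu i k) * g k)"
proof -
  have "(\<integral>\<^sup>+ s. g (stp lam mu i s) \<partial>Uni) = (\<integral>\<^sup>+ s. (\<Sum>k\<le>i+1. g k * indicator {s. stp lam mu i s = k} s) \<partial>Uni)"
  proof (rule nn_integral_cong)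
    fix s
    have "(\<Sum>k\<le>i+1. g k * indicator {s. stp lam mu i s = k} s) = (\<Sum>k\<in>{stp lam mu i s}. g k * indicator {s. stp lam mu i s = k} s)"
      using stp_le[OF lm, of i s] by (intro sum.mono_neutral_right) (auto simp: indicator_def)
    then show "g (stp lam mu i s) = (\<Sum>k\<le>i+1. g k * indicator {s. stp lam mu i s = k} s)" by simp
  qed
  also have "\<dots> = (\<Sum>k\<le>i+1. \<integral>\<^sup>+ s. g k * indicator {s. stp lam mu i s = k} s \<partial>Uni)"
    by (rule nn_integral_sum) measurable
  also have "\<dots> = (\<Sum>k\<le>i+1. g k * emeasure Uni {s. stp lam mu i s = k})"
    by (intro sum.cong refl nn_integral_cmult_indicator) measurable
  also have "\<dots> = (\<Sum>k\<le>i+1. ennreal (ucat_kernel lam mu i k) * g k)"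
    by (simp add: Uni_stp[OF lm] mult.commute)
  finally show ?thesis .
qed

lemma eta_case_nat: "eta lam mu x (case_nat s \<omega>) (Suc n) = eta lam mu (stp lam mu x s) \<omega> n"
  by (induction n) auto

lemma eta_one_time:
  assumes lm: "lam > 0" "mu > 0"
  shows "emeasure Mc {a \<in> space Mc. eta lam mu x a n = y} = ennreal (ucat_kernel_pow lam mu n x y)"
proof (induction n arbitrary: x)
  case 0
  show ?case by (cases "x = y") auto
next
  case (Suc n)
  interpret S: sequence_space Uni by (rule seq_Uni)
  let ?A = "{a \<in> space Mc. eta lam mu x a (Suc n) = y}"
  have A: "?A \<in> sets Mc" by measurable
  have "emeasure Mc ?A = emeasure (distr (Uni \<Otimes>\<^sub>M Mc) Mc (\<lambda>(s, \<omega>). case_nat s \<omega>)) ?A"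
    by (simp add: S.PiM_iter)
  also have "\<dots> = emeasure (Uni \<Otimes>\<^sub>M Mc) ((\<lambda>(s, \<omega>). case_nat s \<omega>) -` ?A \<inter> space (Uni \<Otimes>\<^sub>M Mc))"
    by (rule emeasure_distr) (use A in auto)
  also have "\<dots> = (\<integral>\<^sup>+ s. emeasure Mc (Pair s -` ((\<lambda>(s, \<omega>). case_nat s \<omega>) -` ?A \<inter> space (Uni \<Otimes>\<^sub>M Mc))) \<partial>Uni)"
    by (rule S.emeasure_pair_measure_alt) (use A in measurable)
  also have "\<dots> = (\<integral>\<^sup>+ s. emeasure Mc {a \<in> space Mc. eta lam mu (stp lam mu x s) a n = y} \<partial>Uni)"
    by (intro nn_integral_cong arg_cong2[where f=emeasure] refl)
       (simp del: eta.simps add: space_pair_measure eta_case_nat vimage_def)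
  also have "\<dots> = (\<integral>\<^sup>+ s. ennreal (ucat_kernel_pow lam mu n (stp lam mu x s) y) \<partial>Uni)"
    using Suc by simp
  also have "\<dots> = (\<Sum>k\<le>x+1. ennreal (ucat_kernel lam mu x k) * ennreal (ucat_kernel_pow lam mu n k y))"
    by (rule integral_stp[OF lm])
  also have "\<dots> = ennreal (ucat_kernel_pow lam mu (Suc n) x y)"
  proof -
    have "(\<Sum>k\<le>x+1. ennreal (ucat_kernel lam mu x k) * ennreal (ucat_kernel_pow lam mu n k y))
        = (\<Sum>k\<le>x+1. ennreal (ucat_kernel lam mu x k * ucat_kernel_pow lam mu n k y))"
      using lm by (intro sum.cong refl) (simp add: ennreal_mult kernel_nonneg kpow_nonneg)
    also have "\<dots> = ennreal (\<Sum>k\<le>x+1. ucat_kernel lam mu x k * ucat_kernel_pow lam mu n k y)"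
      using lm by (intro sum_ennreal) (simp add: kernel_nonneg kpow_nonneg)
    finally show ?thesis by (simp only: ucat_kernel_pow.simps)
  qed
  finally show ?case .
qed

lemma eta_comb_less: "j \<le> i \<Longrightarrow> eta lam mu x (comb_seq i \<omega> \<omega>') j = eta lam mu x \<omega> j"
  by (induction j) (auto simp: comb_seq_less)

lemma eta_comb_add: "eta lam mu x (comb_seq i \<omega> \<omega>') (i + j) = eta lam mu (eta lam mu x \<omega> i) \<omega>' j"
proof (induction j)
  case 0
  then show ?case by (simp add: eta_comb_less)
next
  case (Suc j)
  have "comb_seq i \<omega> \<omega>' (i + j) = \<omega>' j" using comb_seq_add[of i \<omega> \<omega>' j] by (simp add: add.commute)
  then show ?case using Suc by simp
qed

lemma mono_upto:
  assumes "\<And>i. Suc i < r \<Longrightarrow> (cum::nat\<Rightarrow>'a::order) i \<le> cum (Suc i)" "i \<le> j" "j < r"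
  shows "cum i \<le> cum j"
  using assms(2,3)
proof (induction j)
  case (Suc j)
  then show ?case using assms(1)[of j] by (cases "i = Suc j") (auto intro: order_trans)
qed simp

lemma chain_fdd:
  assumes lm: "lam > 0" "mu > 0"
    and mono: "\<And>i. Suc i < r \<Longrightarrow> cum i \<le> cum (Suc i)"
  shows "emeasure Mc {a. \<forall>i<r. eta lam mu x a (cum i) = ks i} =
    ennreal (\<Prod>i<r. ucat_kernel_pow lam mu (cum i - (if i = 0 then 0 else cum (i - 1)))
                       (if i = 0 then x else ks (i - 1)) (ks i))"
  using mono
proof (induction r)
  case 0
  then show ?case by simp
next
  case (Suc r)
  interpret S: sequence_space Uni by (rule seq_Uni)
  have IH: "emeasure Mc {a. \<forall>i<r. eta lam mu x a (cum i) = ks i} =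
    ennreal (\<Prod>i<r. ucat_kernel_pow lam mu (cum i - (if i = 0 then 0 else cum (i - 1)))
                       (if i = 0 then x else ks (i - 1)) (ks i))"
    using Suc by auto
  show ?case
  proof (cases "r = 0")
    case True
    then show ?thesis using eta_one_time[OF lm, of x "cum 0" "ks 0"] by simp
  next
    case False
    define n where "n = cum (r - 1)"
    define A where "A = {a. \<forall>i<r. eta lam mu x a (cum i) = ks i}"
    define B where "B = {a. eta lam mu (ks (r - 1)) a (cum r - n) = ks r}"
    define C where "C = {a. \<forall>i<Suc r. eta lam mu x a (cum i) = ks i}"
    have le: "i < r \<Longrightarrow> cum i \<le> n" for i
      unfolding n_def by (rule mono_upto[where r="Suc r" and cum=cum, OF Suc.prems]) auto
    have nr: "n \<le> cum r" unfolding n_def using Suc.prems[of "r - 1"] False by simp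
    have Am: "A \<in> sets Mc" unfolding A_def by (rule sets_Mc_Collect) measurable
    have Bm: "B \<in> sets Mc" unfolding B_def by (rule sets_Mc_Collect) measurable
    have Cm: "C \<in> sets Mc" unfolding C_def by (rule sets_Mc_Collect) measurable
    have pre: "(\<lambda>(\<omega>, \<omega>'). comb_seq n \<omega> \<omega>') -` C \<inter> space (Mc \<Otimes>\<^sub>M Mc) = A \<times> B"
    proof (intro set_eqI iffI)
      fix p assume p: "p \<in> (\<lambda>(\<omega>, \<omega>'). comb_seq n \<omega> \<omega>') -` C \<inter> space (Mc \<Otimes>\<^sub>M Mc)"
      obtain \<omega> \<omega>' where pp: "p = (\<omega>, \<omega>')" by fastforce
      have h: "\<forall>i<Suc r. eta lam mu x (comb_seq n \<omega> \<omega>') (cum i) = ks i" using p pp by (simp add: C_def)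
      have a: "\<forall>i<r. eta lam mu x \<omega> (cum i) = ks i"
      proof (intro allI impI)
        fix i assume "i < r"
        then show "eta lam mu x \<omega> (cum i) = ks i"
          using h[rule_format, of i] le[of i] eta_comb_less[of "cum i" n lam mu x \<omega> \<omega>'] by simp
      qed
      have "eta lam mu x \<omega> n = ks (r - 1)" using a False unfolding n_def by simp
      moreover have "eta lam mu x (comb_seq n \<omega> \<omega>') (n + (cum r - n)) = ks r" using h nr by simp
      ultimately have "eta lam mu (ks (r - 1)) \<omega>' (cum r - n) = ks r" by (simp add: eta_comb_add)
      then show "p \<in> A \<times> B" using a pp by (simp add: A_def B_def)
    next
      fix p assume p: "p \<in> A \<times> B"
      obtain \<omega> \<omega>' where pp: "p = (\<omega>, \<omega>')" by fastforce
      have a: "\<forall>i<r. eta lam mu x \<omega> (cum i) = ks i" and b: "eta lam mu (ks (r - 1)) \<omega>' (cum r - n) = ks r"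
        using p pp by (auto simp: A_def B_def)
      have "eta lam mu x \<omega> n = ks (r - 1)" using a False unfolding n_def by simp
      then have "eta lam mu x (comb_seq n \<omega> \<omega>') (n + (cum r - n)) = ks r" using b by (simp add: eta_comb_add)
      then have "eta lam mu x (comb_seq n \<omega> \<omega>') (cum r) = ks r" using nr by simp
      moreover have "\<forall>i<r. eta lam mu x (comb_seq n \<omega> \<omega>') (cum i) = ks i"
        using a le eta_comb_less[of _ n lam mu x \<omega> \<omega>'] by simp
      ultimately show "p \<in> (\<lambda>(\<omega>, \<omega>'). comb_seq n \<omega> \<omega>') -` C \<inter> space (Mc \<Otimes>\<^sub>M Mc)"
        using pp by (auto simp: C_def space_pair_measure less_Suc_eq)
    qed
    have "emeasure Mc C = emeasure (distr (Mc \<Otimes>\<^sub>M Mc) Mc (\<lambda>(\<omega>, \<omega>'). comb_seq n \<omega> \<omega>')) C"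
      by (simp add: S.PiM_comb_seq)
    also have "\<dots> = emeasure (Mc \<Otimes>\<^sub>M Mc) (A \<times> B)"
      by (subst emeasure_distr) (use Cm pre in auto)
    also have "\<dots> = emeasure Mc A * emeasure Mc B"
      by (rule S.emeasure_pair_measure_Times[OF Am Bm])
    also have "emeasure Mc B = ennreal (ucat_kernel_pow lam mu (cum r - n) (ks (r - 1)) (ks r))"
      using eta_one_time[OF lm] by (simp add: B_def)
    finally show ?thesis using IH False
      by (simp add: C_def A_def n_def ennreal_mult[symmetric] kpow_nonneg[OF lm] prod_nonneg)
  qed
qed

definition pz :: "real \<Rightarrow> nat \<Rightarrow> real" where
  "pz a k = exp (- a) * a ^ k / fact k"

lemma pz_nonneg: "0 \<le> a \<Longrightarrow> 0 \<le> pz a k"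
  by (simp add: pz_def)

lemma sum_PiE_Suc:
  fixes F :: "(nat \<Rightarrow> 'b) \<Rightarrow> 'c::comm_monoid_add"
  assumes "finite S"
  shows "(\<Sum>f\<in>PiE {..<Suc n} (\<lambda>_. S). F f) = (\<Sum>y\<in>S. \<Sum>g\<in>PiE {..<n} (\<lambda>_. S). F (g(n := y)))"
proof -
  have eq: "PiE {..<Suc n} (\<lambda>_. S) = (\<lambda>(y, g). g(n := y)) ` (S \<times> PiE {..<n} (\<lambda>_. S))"
    using PiE_insert_eq[of n "{..<n}" "\<lambda>_. S"] by (simp add: lessThan_Suc)
  have inj: "inj_on (\<lambda>(y, g). g(n := y)) (S \<times> PiE {..<n} (\<lambda>_. S))"
    using inj_combinator[of n "{..<n}" "\<lambda>_. S"] by simp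
  have "(\<Sum>f\<in>PiE {..<Suc n} (\<lambda>_. S). F f) = (\<Sum>p\<in>S \<times> PiE {..<n} (\<lambda>_. S). F ((\<lambda>(y, g). g(n := y)) p))"
    unfolding eq by (rule sum.reindex[OF inj, unfolded comp_def])
  also have "\<dots> = (\<Sum>(y, g)\<in>S \<times> PiE {..<n} (\<lambda>_. S). F (g(n := y)))"
    by (intro sum.cong refl) auto
  also have "\<dots> = (\<Sum>y\<in>S. \<Sum>g\<in>PiE {..<n} (\<lambda>_. S). F (g(n := y)))"
    by (rule sum.cartesian_product[symmetric])
  finally show ?thesis .
qed

lemma pz_conv:
  assumes "0 \<le> a" "0 \<le> b"
  shows "(\<Sum>k\<le>n. pz a k * pz b (n - k)) = pz (a + b) n"
proof -
  have "(\<Sum>k\<le>n. pz a k * pz b (n - k)) = (\<Sum>k\<le>n. exp (-(a+b)) / fact n * (real (n choose k) * a ^ k * b ^ (n - k)))"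
  proof (intro sum.cong refl)
    fix k assume "k \<in> {..n}"
    then have kn: "k \<le> n" by simp
    have "real (n choose k) = fact n / (fact k * fact (n - k))"
      using binomial_fact[OF kn] by simp
    moreover have "exp (-(a+b)) = exp (-a) * exp (-b)" by (simp add: exp_add[symmetric])
    ultimately show "pz a k * pz b (n - k) = exp (-(a+b)) / fact n * (real (n choose k) * a ^ k * b ^ (n - k))"
      by (simp add: pz_def)
  qed
  also have "\<dots> = exp (-(a+b)) / fact n * (\<Sum>k\<le>n. real (n choose k) * a ^ k * b ^ (n - k))"
    by (simp add: sum_distrib_left)
  also have "\<dots> = pz (a + b) n"
    by (simp add: pz_def binomial_ring[symmetric] add.commute)
  finally show ?thesis .
qed

definition convG :: "(nat \<Rightarrow> real) \<Rightarrow> nat \<Rightarrow> nat \<Rightarrow> nat \<Rightarrow> real" where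
  "convG x B N n = (\<Sum>v\<in>PiE {..<B} (\<lambda>_. {..N}). if (\<Sum>m<B. v m) = n then (\<Prod>m<B. pz (x m) (v m)) else 0)"

lemma convG_eq:
  assumes "\<And>m. 0 \<le> x m" "n \<le> N"
  shows "convG x B N n = pz (\<Sum>m<B. x m) n"
  using assms(2)
proof (induction B arbitrary: n)
  case 0
  then show ?case by (cases "n = 0") (auto simp: convG_def pz_def PiE_empty_domain)
next
  case (Suc B)
  have "convG x (Suc B) N n = (\<Sum>y\<le>N. \<Sum>g\<in>PiE {..<B} (\<lambda>_. {..N}).
      if (\<Sum>m<Suc B. (g(B := y)) m) = n then (\<Prod>m<Suc B. pz (x m) ((g(B := y)) m)) else 0)"
    unfolding convG_def by (rule sum_PiE_Suc) simp
  also have "\<dots> = (\<Sum>y\<le>N. \<Sum>g\<in>PiE {..<B} (\<lambda>_. {..N}).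
      if y \<le> n then pz (x B) y * (if (\<Sum>m<B. g m) = n - y then (\<Prod>m<B. pz (x m) (g m)) else 0) else 0)"
  proof (intro sum.cong refl)
    fix y :: nat and g :: "nat \<Rightarrow> nat"
    have s: "(\<Sum>m<Suc B. (g(B := y)) m) = (\<Sum>m<B. g m) + y"
      by (simp add: sum.cong[of "{..<B}" "{..<B}" "\<lambda>m. (g(B := y)) m" g])
    have p: "(\<Prod>m<Suc B. pz (x m) ((g(B := y)) m)) = pz (x B) y * (\<Prod>m<B. pz (x m) (g m))"
      by (simp add: prod.cong[of "{..<B}" "{..<B}" "\<lambda>m. pz (x m) ((g(B := y)) m)" "\<lambda>m. pz (x m) (g m)"])
    show "(if (\<Sum>m<Suc B. (g(B := y)) m) = n then (\<Prod>m<Suc B. pz (x m) ((g(B := y)) m)) else 0) =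
      (if y \<le> n then pz (x B) y * (if (\<Sum>m<B. g m) = n - y then (\<Prod>m<B. pz (x m) (g m)) else 0) else 0)"
      unfolding s p by auto
  qed
  also have "\<dots> = (\<Sum>y\<le>N. if y \<le> n then pz (x B) y * convG x B N (n - y) else 0)"
    unfolding convG_def by (intro sum.cong refl) (auto simp: sum_distrib_left)
  also have "\<dots> = (\<Sum>y\<le>n. pz (x B) y * pz (\<Sum>m<B. x m) (n - y))"
  proof -
    have "(\<Sum>y\<le>N. if y \<le> n then pz (x B) y * convG x B N (n - y) else 0) =
        (\<Sum>y\<le>n. pz (x B) y * convG x B N (n - y))"
      using Suc.prems by (intro sum.mono_neutral_cong_right) auto
    also have "\<dots> = (\<Sum>y\<le>n. pz (x B) y * pz (\<Sum>m<B. x m) (n - y))"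
      using Suc by (intro sum.cong refl) auto
    finally show ?thesis .
  qed
  also have "\<dots> = pz (x B + (\<Sum>m<B. x m)) n"
    by (rule pz_conv) (auto intro: assms sum_nonneg)
  finally show ?case by (simp add: add.commute)
qed

definition mS :: "nat \<Rightarrow> (nat \<Rightarrow> real) \<Rightarrow> nat \<Rightarrow> (nat \<Rightarrow> nat) \<Rightarrow> real" where
  "mS r l n c = (\<Sum>f\<in>PiE {..<n} (\<lambda>_. {..r}).
     if (\<forall>i\<le>r. card {j. j < n \<and> f j = i} = c i) then (\<Prod>j<n. l (f j)) else 0)"

lemma card_upd_Suc:
  "card {j. j < Suc n \<and> (g(n := y)) j = i} = card {j. j < n \<and> g j = i} + (if y = i then 1 else 0)"
proof -
  have "{j. j < Suc n \<and> (g(n := y)) j = i} = {j. j < n \<and> g j = i} \<union> (if y = i then {n} else {})"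
    by (auto simp: less_Suc_eq)
  moreover have "finite {j. j < n \<and> g j = i}" by simp
  ultimately show ?thesis by (auto simp: card_insert_if)
qed

lemma prod_step:
  fixes l :: "nat \<Rightarrow> real"
  assumes "y \<le> r" "c y \<ge> 1"
  shows "l y * (\<Prod>i\<le>r. l i ^ (c(y := c y - 1)) i / fact ((c(y := c y - 1)) i)) =
         real (c y) * (\<Prod>i\<le>r. l i ^ c i / fact (c i))"
proof -
  obtain k where k: "c y = Suc k" using assms(2) by (cases "c y") auto
  have "(\<Prod>i\<le>r. l i ^ (c(y := c y - 1)) i / fact ((c(y := c y - 1)) i)) =
        (l y ^ k / fact k) * (\<Prod>i\<in>{..r} - {y}. l i ^ c i / fact (c i))"
    using assms(1) k by (subst prod.remove[of _ y]) auto
  moreover have "(\<Prod>i\<le>r. l i ^ c i / fact (c i)) =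
        (l y ^ Suc k / fact (Suc k)) * (\<Prod>i\<in>{..r} - {y}. l i ^ c i / fact (c i))"
    using assms(1) k by (subst prod.remove[of _ y]) auto
  moreover have "l y * (l y ^ k / fact k) = real (Suc k) * (l y ^ Suc k / fact (Suc k))"
  proof -
    have "l y * (l y ^ k / fact k) = l y ^ Suc k / fact k" by simp
    also have "\<dots> = real (Suc k) * (l y ^ Suc k / (real (Suc k) * fact k))"
      by (simp del: of_nat_Suc)
    also have "\<dots> = real (Suc k) * (l y ^ Suc k / fact (Suc k))"
      by (simp only: fact_Suc)
    finally show ?thesis .
  qed
  ultimately show ?thesis using k by (simp add: mult.assoc[symmetric])
qed

lemma mS_eq:
  assumes "(\<Sum>i\<le>r. c i) = n"
  shows "mS r l n c = fact n * (\<Prod>i\<le>r. l i ^ c i / fact (c i))"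
  using assms
proof (induction n arbitrary: c)
  case 0
  then have "\<forall>i\<le>r. c i = 0" by simp
  then show ?case by (simp add: mS_def PiE_empty_domain)
next
  case (Suc n)
  have "mS r l (Suc n) c = (\<Sum>y\<le>r. \<Sum>g\<in>PiE {..<n} (\<lambda>_. {..r}).
      if (\<forall>i\<le>r. card {j. j < Suc n \<and> (g(n := y)) j = i} = c i) then (\<Prod>j<Suc n. l ((g(n := y)) j)) else 0)"
    unfolding mS_def by (rule sum_PiE_Suc) simp
  also have "\<dots> = (\<Sum>y\<le>r. l y * (if c y \<ge> 1 then mS r l n (c(y := c y - 1)) else 0))"
  proof (intro sum.cong refl)
    fix y assume y: "y \<in> {..r}"
    have "(\<Sum>g\<in>PiE {..<n} (\<lambda>_. {..r}).
      if (\<forall>i\<le>r. card {j. j < Suc n \<and> (g(n := y)) j = i} = c i) then (\<Prod>j<Suc n. l ((g(n := y)) j)) else 0)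
      = (\<Sum>g\<in>PiE {..<n} (\<lambda>_. {..r}). l y *
      (if c y \<ge> 1 then (if (\<forall>i\<le>r. card {j. j < n \<and> g j = i} = (c(y := c y - 1)) i) then (\<Prod>j<n. l (g j)) else 0) else 0))"
    proof (intro sum.cong refl)
      fix g :: "nat \<Rightarrow> nat"
      have p: "(\<Prod>j<Suc n. l ((g(n := y)) j)) = l y * (\<Prod>j<n. l (g j))"
        by (simp add: prod.cong[of "{..<n}" "{..<n}" "\<lambda>j. l ((g(n := y)) j)" "\<lambda>j. l (g j)"])
      have c: "(\<forall>i\<le>r. card {j. j < Suc n \<and> (g(n := y)) j = i} = c i) \<longleftrightarrow>
          (c y \<ge> 1 \<and> (\<forall>i\<le>r. card {j. j < n \<and> g j = i} = (c(y := c y - 1)) i))"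
        using y unfolding card_upd_Suc by (auto split: if_splits)
      show "(if (\<forall>i\<le>r. card {j. j < Suc n \<and> (g(n := y)) j = i} = c i) then (\<Prod>j<Suc n. l ((g(n := y)) j)) else 0)
        = l y * (if c y \<ge> 1 then (if (\<forall>i\<le>r. card {j. j < n \<and> g j = i} = (c(y := c y - 1)) i) then (\<Prod>j<n. l (g j)) else 0) else 0)"
        unfolding c p by auto
    qed
    also have "\<dots> = l y * (if c y \<ge> 1 then mS r l n (c(y := c y - 1)) else 0)"
      unfolding mS_def by (simp add: sum_distrib_left)
    finally show "(\<Sum>g\<in>PiE {..<n} (\<lambda>_. {..r}).
      if (\<forall>i\<le>r. card {j. j < Suc n \<and> (g(n := y)) j = i} = c i) then (\<Prod>j<Suc n. l ((g(n := y)) j)) else 0)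
      = l y * (if c y \<ge> 1 then mS r l n (c(y := c y - 1)) else 0)" .
  qed
  also have "\<dots> = (\<Sum>y\<le>r. fact n * (real (c y) * (\<Prod>i\<le>r. l i ^ c i / fact (c i))))"
  proof (intro sum.cong refl)
    fix y assume y: "y \<in> {..r}"
    show "l y * (if c y \<ge> 1 then mS r l n (c(y := c y - 1)) else 0) =
      fact n * (real (c y) * (\<Prod>i\<le>r. l i ^ c i / fact (c i)))"
    proof (cases "c y \<ge> 1")
      case True
      have "(\<Sum>i\<le>r. (c(y := c y - 1)) i) = n"
      proof -
        have "(\<Sum>i\<le>r. c i) = c y + (\<Sum>i\<in>{..r} - {y}. c i)"
          using y by (subst sum.remove[of _ y]) auto
        moreover have "(\<Sum>i\<le>r. (c(y := c y - 1)) i) = (c y - 1) + (\<Sum>i\<in>{..r} - {y}. c i)"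
          using y by (subst sum.remove[of _ y]) auto
        ultimately show ?thesis using Suc.prems True by simp
      qed
      then have "mS r l n (c(y := c y - 1)) = fact n * (\<Prod>i\<le>r. l i ^ (c(y := c y - 1)) i / fact ((c(y := c y - 1)) i))"
        by (rule Suc.IH)
      then show ?thesis using prod_step[of y r c l] y True by (simp add: algebra_simps)
    qed simp
  qed
  also have "\<dots> = fact n * real (\<Sum>y\<le>r. c y) * (\<Prod>i\<le>r. l i ^ c i / fact (c i))"
    by (simp add: sum_distrib_left sum_distrib_right algebra_simps)
  also have "\<dots> = fact (Suc n) * (\<Prod>i\<le>r. l i ^ c i / fact (c i))"
    using Suc.prems by (simp add: algebra_simps)
  finally show ?case .
qed

definition PR :: "real \<Rightarrow> real measure" where
  "PR a = distr (measure_pmf (poisson_pmf a)) borel real"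

definition Bl :: "real \<Rightarrow> (nat \<Rightarrow> real) measure" where
  "Bl a = PiM UNIV (\<lambda>j::nat. if j = 0 then PR a else Uni)"

definition cnt :: "(nat \<Rightarrow> real) \<Rightarrow> nat" where
  "cnt \<beta> = nat \<lfloor>\<beta> 0\<rfloor>"

definition clamp :: "real \<Rightarrow> real" where
  "clamp x = max 0 (min 1 x)"

definition lab :: "nat \<Rightarrow> (nat \<Rightarrow> real) \<Rightarrow> real \<Rightarrow> nat" where
  "lab r s v = (LEAST i. i = r \<or> posf v \<le> s i)"

definition cellc :: "nat \<Rightarrow> (nat \<Rightarrow> real) \<Rightarrow> nat \<Rightarrow> (nat \<Rightarrow> real) \<Rightarrow> nat" where
  "cellc r s i \<beta> = card {j. j < cnt \<beta> \<and> lab r s (\<beta> (Suc j)) = i}"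

definition lenc :: "nat \<Rightarrow> (nat \<Rightarrow> real) \<Rightarrow> nat \<Rightarrow> real" where
  "lenc r s i = (if i = r then 1 else clamp (s i)) - (if i = 0 then 0 else clamp (s (i - 1)))"

lemma sets_PR[simp, measurable_cong]: "sets (PR a) = sets borel"
  by (simp add: PR_def)

lemma space_PR[simp]: "space (PR a) = UNIV"
  by (simp add: PR_def)

lemma prob_space_PR: "a > 0 \<Longrightarrow> prob_space (PR a)"
  unfolding PR_def by (intro prob_space.prob_space_distr measure_pmf.prob_space_axioms) auto

lemma PR_count: "a > 0 \<Longrightarrow> emeasure (PR a) {x. nat \<lfloor>x\<rfloor> = n} = ennreal (a ^ n / fact n * exp (- a))"
proof -
  assume a: "a > 0"
  have "emeasure (PR a) {x. nat \<lfloor>x\<rfloor> = n} = emeasure (measure_pmf (poisson_pmf a)) (real -` {x. nat \<lfloor>x\<rfloor> = n})"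
    unfolding PR_def by (subst emeasure_distr) auto
  also have "real -` {x. nat \<lfloor>x\<rfloor> = n} = {n}" by auto
  finally show ?thesis using a by (simp add: emeasure_pmf_single)
qed

lemma lab_meas[measurable]: "lab r s \<in> measurable borel (count_space UNIV)"
  unfolding lab_def by measurable

lemma lab_le: "lab r s v \<le> r"
  unfolding lab_def by (rule Least_le) simp

lemma lab_iff:
  assumes mono: "\<And>i. Suc i < r \<Longrightarrow> s i \<le> s (Suc i)" and i: "i \<le> r"
  shows "lab r s v = i \<longleftrightarrow> (i = r \<or> posf v \<le> s i) \<and> (i = 0 \<or> \<not> posf v \<le> s (i - 1))"
proof
  assume l: "lab r s v = i"
  have P: "lab r s v = r \<or> posf v \<le> s (lab r s v)"
    unfolding lab_def by (rule LeastI[of _ r]) simp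
  have nP: "\<not> (j = r \<or> posf v \<le> s j)" if "j < lab r s v" for j
    using not_less_Least[OF that[unfolded lab_def]] by simp
  show "(i = r \<or> posf v \<le> s i) \<and> (i = 0 \<or> \<not> posf v \<le> s (i - 1))"
    using P nP[of "i - 1"] l by (cases i) auto
next
  assume h: "(i = r \<or> posf v \<le> s i) \<and> (i = 0 \<or> \<not> posf v \<le> s (i - 1))"
  show "lab r s v = i"
    unfolding lab_def
  proof (rule Least_equality)
    show "i = r \<or> posf v \<le> s i" using h by simp
  next
    fix j assume j: "j = r \<or> posf v \<le> s j"
    show "i \<le> j"
    proof (rule ccontr)
      assume "\<not> i \<le> j"
      then have ji: "j < i" by simp
      then have "j \<noteq> r" using i by simp
      then have "posf v \<le> s j" using j by simp
      moreover have "s j \<le> s (i - 1)" using ji i by (intro mono_upto[where r=r and cum=s, OF mono]) auto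
      ultimately show False using h ji by auto
    qed
  qed
qed

lemma clamp_mono: "a \<le> b \<Longrightarrow> clamp a \<le> clamp b"
  by (simp add: clamp_def)

lemma clamp_bounds: "0 \<le> clamp a" "clamp a \<le> 1"
  by (auto simp: clamp_def)

lemma lborel_interval01:
  "emeasure lborel ({0<..<1} \<inter> {v. a < v \<and> v \<le> b}) = ennreal (max 0 (clamp b - clamp a))"
proof (cases "b < 1")
  case True
  have e: "{0<..<1} \<inter> {v. a < v \<and> v \<le> b} = {max 0 a <.. b}" using True by auto
  show ?thesis
  proof (cases "max 0 a \<le> b")
    case True
    then have "clamp b = b" "clamp a = max 0 a" using \<open>b < 1\<close> by (auto simp: clamp_def)
    then show ?thesis unfolding e using True by simp
  next
    case False
    then have "clamp b \<le> clamp a" by (auto simp: clamp_def)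
    moreover have emp: "{max 0 a <.. b} = {}" using False by auto
    ultimately show ?thesis unfolding e emp by simp
  qed
next
  case False
  have e: "{0<..<1} \<inter> {v. a < v \<and> v \<le> b} = {max 0 a <..< 1}" using False by auto
  have cb: "clamp b = 1" using False by (simp add: clamp_def)
  show ?thesis
  proof (cases "max 0 a \<le> 1")
    case True
    then have "clamp a = max 0 a" by (auto simp: clamp_def)
    then show ?thesis unfolding e cb using True by simp
  next
    case False
    then have "clamp a = 1" by (auto simp: clamp_def)
    moreover have emp: "{max 0 a <..< 1} = {}" using False by auto
    ultimately show ?thesis unfolding e cb emp by simp
  qed
qed

lemma lenc_nonneg:
  assumes mono: "\<And>i. Suc i < r \<Longrightarrow> s i \<le> s (Suc i)" and i: "i \<le> r"
  shows "0 \<le> lenc r s i"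
proof -
  have "i \<noteq> 0 \<Longrightarrow> i \<noteq> r \<Longrightarrow> s (i - 1) \<le> s i" using mono[of "i - 1"] i by auto
  then show ?thesis using clamp_bounds[of "s i"] clamp_bounds[of "s (i - 1)"] clamp_mono[of "s (i - 1)" "s i"]
    by (auto simp: lenc_def)
qed

lemma Uni_lab:
  assumes mono: "\<And>i. Suc i < r \<Longrightarrow> s i \<le> s (Suc i)" and i: "i \<le> r"
  shows "emeasure Uni {v. lab r s v = i} = ennreal (lenc r s i)"
proof -
  define a where "a = (if i = 0 then 0 else s (i - 1))"
  define b where "b = (if i = r then 1 else s i)"
  have "{0<..<1} \<inter> {v. lab r s v = i} = {0<..<1} \<inter> {v. a < v \<and> v \<le> b}"
    using lab_iff[where r=r and s=s, OF mono i] by (auto simp: a_def b_def posf_def)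
  moreover have "{v. lab r s v = i} \<in> sets borel" by measurable
  ultimately have "emeasure Uni {v. lab r s v = i} = ennreal (max 0 (clamp b - clamp a))"
    by (simp add: emeasure_Uni lborel_interval01)
  also have "clamp b - clamp a = lenc r s i"
    by (simp add: lenc_def a_def b_def clamp_def)
  finally show ?thesis using lenc_nonneg[where r=r and s=s, OF mono i] by simp
qed

lemma sum_lenc:
  assumes mono: "\<And>i. Suc i < r \<Longrightarrow> s i \<le> s (Suc i)"
  shows "(\<Sum>i\<le>r. lenc r s i) = 1"
proof -
  define B where "B i = (if i = 0 then 0 else if i = Suc r then 1 else clamp (s (i - 1)))" for i
  have "(\<Sum>i\<le>r. lenc r s i) = (\<Sum>i<Suc r. B (Suc i) - B i)"
    by (intro sum.cong) (auto simp: lenc_def B_def)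
  also have "\<dots> = B (Suc r) - B 0" by (rule sum_lessThan_telescope)
  finally show ?thesis by (simp add: B_def)
qed

lemma prob_space_Mi: "a > 0 \<Longrightarrow> prob_space (if j = 0 then PR a else Uni)"
  using prob_space_PR prob_space_Uni by auto

lemma Bl_pps: "a > 0 \<Longrightarrow> product_prob_space (\<lambda>j::nat. if j = 0 then PR a else Uni)"
  unfolding product_prob_space_def product_prob_space_axioms_def product_sigma_finite_def
  using prob_space_Mi prob_space_imp_sigma_finite by blast

lemma sets_Bl[measurable_cong]: "sets (Bl a) = sets (PiM UNIV (\<lambda>_::nat. borel::real measure))"
  unfolding Bl_def by (rule sets_PiM_cong) auto

lemma space_Bl[simp]: "space (Bl a) = UNIV"
  using sets_eq_imp_space_eq[OF sets_Bl[of a]] by (simp add: space_PiM PiE_UNIV_domain)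

lemma prob_space_Bl: "a > 0 \<Longrightarrow> prob_space (Bl a)"
  unfolding Bl_def by (intro prob_space_PiM prob_space_Mi)

lemma cnt_meas[measurable]: "cnt \<in> measurable (Bl a) (count_space UNIV)"
  unfolding cnt_def by measurable

lemma cellc_meas[measurable]: "cellc r s i \<in> measurable (Bl a) (count_space UNIV)"
  unfolding cellc_def cnt_def by measurable

lemma Bl_rect:
  assumes a: "a > 0"
  shows "emeasure (Bl a) {\<beta>. cnt \<beta> = n \<and> (\<forall>j<n. lab r s (\<beta> (Suc j)) = f j)} =
    ennreal (a ^ n / fact n * exp (- a)) * (\<Prod>j<n. emeasure Uni {v. lab r s v = f j})"
proof -
  interpret P: product_prob_space "\<lambda>j::nat. if j = 0 then PR a else Uni" "UNIV :: nat set" by (rule Bl_pps[OF a])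
  define X where "X j = (if j = 0 then {x. nat \<lfloor>x\<rfloor> = n} else {v. lab r s v = f (j - 1)})" for j
  define J where "J = insert 0 (Suc ` {..<n})"
  have XJ: "X j \<in> sets (if j = 0 then PR a else Uni)" for j
    unfolding X_def by (cases "j = 0") simp_all
  have "{\<beta>. cnt \<beta> = n \<and> (\<forall>j<n. lab r s (\<beta> (Suc j)) = f j)} =
      {x \<in> space (PiM UNIV (\<lambda>j::nat. if j = 0 then PR a else Uni)). \<forall>i\<in>J. x i \<in> X i}"
    by (auto simp: J_def X_def cnt_def space_PiM PiE_UNIV_domain)
  moreover have "emeasure (PiM UNIV (\<lambda>j::nat. if j = 0 then PR a else Uni)) {x \<in> space (PiM UNIV (\<lambda>j::nat. if j = 0 then PR a else Uni)). \<forall>i\<in>J. x i \<in> X i}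
      = (\<Prod>i\<in>J. emeasure (if i = 0 then PR a else Uni) (X i))"
    by (rule P.emeasure_PiM_Collect) (auto simp: XJ J_def)
  ultimately have "emeasure (Bl a) {\<beta>. cnt \<beta> = n \<and> (\<forall>j<n. lab r s (\<beta> (Suc j)) = f j)} =
      (\<Prod>i\<in>J. emeasure (if i = 0 then PR a else Uni) (X i))"
    unfolding Bl_def by simp
  also have "\<dots> = emeasure (PR a) (X 0) * (\<Prod>i\<in>Suc ` {..<n}. emeasure (if i = 0 then PR a else Uni) (X i))"
    unfolding J_def by (subst prod.insert) auto
  also have "(\<Prod>i\<in>Suc ` {..<n}. emeasure (if i = 0 then PR a else Uni) (X i)) = (\<Prod>i\<in>Suc ` {..<n}. emeasure Uni (X i))"
    by (rule prod.cong) auto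
  also have "(\<Prod>i\<in>Suc ` {..<n}. emeasure Uni (X i)) = (\<Prod>j<n. emeasure Uni {v. lab r s v = f j})"
    by (subst prod.reindex) (auto simp: X_def)
  finally show ?thesis using PR_count[OF a] by (simp add: X_def)
qed

lemma card_partition:
  assumes "\<And>j. g j \<le> (r::nat)"
  shows "(\<Sum>i\<le>r. card {j. j < N \<and> g j = i}) = N"
proof -
  have "(\<Sum>i\<le>r. card {j. j < N \<and> g j = i}) = (\<Sum>i\<le>r. sum (\<lambda>_. 1::nat) {j \<in> {..<N}. g j = i})"
    by (intro sum.cong refl) simp
  also have "\<dots> = sum (\<lambda>_. 1::nat) {..<N}"
    by (rule sum.group) (use assms in auto)
  finally show ?thesis by simp
qed

lemma block_law:
  assumes a: "a > 0" and mono: "\<And>i. Suc i < r \<Longrightarrow> s i \<le> s (Suc i)"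
  shows "emeasure (Bl a) {\<beta>. \<forall>i\<le>r. cellc r s i \<beta> = c i} = ennreal (\<Prod>i\<le>r. pz (a * lenc r s i) (c i))"
proof -
  define n where "n = (\<Sum>i\<le>r. c i)"
  define F where "F = {f \<in> PiE {..<n} (\<lambda>_. {..r}). \<forall>i\<le>r. card {j. j < n \<and> f j = i} = c i}"
  define R where "R f = {\<beta>. cnt \<beta> = n \<and> (\<forall>j<n. lab r s (\<beta> (Suc j)) = f j)}" for f
  have finF: "finite F" unfolding F_def by (rule finite_subset[of _ "PiE {..<n} (\<lambda>_. {..r})"]) (auto intro: finite_PiE)
  have ev: "{\<beta>. \<forall>i\<le>r. cellc r s i \<beta> = c i} = (\<Union>f\<in>F. R f)"
  proof (intro set_eqI iffI)
    fix \<beta> assume b: "\<beta> \<in> {\<beta>. \<forall>i\<le>r. cellc r s i \<beta> = c i}"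
    have N: "cnt \<beta> = n"
      using b card_partition[of "\<lambda>j. lab r s (\<beta> (Suc j))" r "cnt \<beta>"] lab_le
      by (auto simp: n_def cellc_def)
    define f where "f = restrict (\<lambda>j. lab r s (\<beta> (Suc j))) {..<n}"
    have "f \<in> F"
    proof -
      have "f \<in> PiE {..<n} (\<lambda>_. {..r})" by (auto simp: f_def lab_le)
      moreover have "card {j. j < n \<and> f j = i} = c i" if "i \<le> r" for i
      proof -
        have "{j. j < n \<and> f j = i} = {j. j < cnt \<beta> \<and> lab r s (\<beta> (Suc j)) = i}"
          using N by (auto simp: f_def)
        then show ?thesis using b that by (simp add: cellc_def)
      qed
      ultimately show ?thesis by (simp add: F_def)
    qed
    moreover have "\<beta> \<in> R f" using N by (simp add: R_def f_def)
    ultimately show "\<beta> \<in> (\<Union>f\<in>F. R f)" by blast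
  next
    fix \<beta> assume "\<beta> \<in> (\<Union>f\<in>F. R f)"
    then obtain f where f: "f \<in> F" "\<beta> \<in> R f" by blast
    have "cellc r s i \<beta> = c i" if "i \<le> r" for i
    proof -
      have "{j. j < cnt \<beta> \<and> lab r s (\<beta> (Suc j)) = i} = {j. j < n \<and> f j = i}"
        using f(2) by (auto simp: R_def)
      then show ?thesis using f(1) that by (simp add: cellc_def F_def)
    qed
    then show "\<beta> \<in> {\<beta>. \<forall>i\<le>r. cellc r s i \<beta> = c i}" by simp
  qed
  have disj: "disjoint_family_on R F"
    unfolding disjoint_family_on_def
  proof (intro ballI impI)
    fix f g assume fg: "f \<in> F" "g \<in> F" "f \<noteq> g"
    then obtain j where j: "f j \<noteq> g j" by blast
    then have "j < n" using fg by (auto simp: F_def PiE_def extensional_def)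
    then show "R f \<inter> R g = {}" using j by (auto simp: R_def)
  qed
  have Rm: "R ` F \<subseteq> sets (Bl a)"
  proof -
    have "R f \<in> sets (Bl a)" for f
    proof -
      have "R f = {\<beta> \<in> space (Bl a). cnt \<beta> = n \<and> (\<forall>j<n. lab r s (\<beta> (Suc j)) = f j)}"
        by (simp add: R_def)
      also have "\<dots> \<in> sets (Bl a)" unfolding cnt_def by measurable
      finally show ?thesis .
    qed
    then show ?thesis by auto
  qed
  have l0: "\<And>i. i \<le> r \<Longrightarrow> 0 \<le> lenc r s i" using lenc_nonneg[where r=r and s=s, OF mono] by blast
  have "emeasure (Bl a) {\<beta>. \<forall>i\<le>r. cellc r s i \<beta> = c i} = (\<Sum>f\<in>F. emeasure (Bl a) (R f))"
    unfolding ev by (rule sum_emeasure[symmetric, OF Rm disj finF])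
  also have "\<dots> = (\<Sum>f\<in>F. ennreal (a ^ n / fact n * exp (- a) * (\<Prod>j<n. lenc r s (f j))))"
  proof (intro sum.cong refl)
    fix f assume f: "f \<in> F"
    then have fr: "j < n \<Longrightarrow> f j \<le> r" for j by (auto simp: F_def PiE_def Pi_def)
    have "emeasure (Bl a) (R f) = ennreal (a ^ n / fact n * exp (- a)) * (\<Prod>j<n. ennreal (lenc r s (f j)))"
      unfolding R_def Bl_rect[OF a] using Uni_lab[where r=r and s=s, OF mono] fr
      by (intro arg_cong2[where f="(*)"] refl prod.cong) auto
    also have "\<dots> = ennreal (a ^ n / fact n * exp (- a) * (\<Prod>j<n. lenc r s (f j)))"
    proof -
      have pn: "(\<Prod>j<n. ennreal (lenc r s (f j))) = ennreal (\<Prod>j<n. lenc r s (f j))"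
        by (rule prod_ennreal) (use l0 fr in auto)
      show ?thesis unfolding pn using a by (subst ennreal_mult'[symmetric]) (auto simp: field_simps)
    qed
    finally show "emeasure (Bl a) (R f) = ennreal (a ^ n / fact n * exp (- a) * (\<Prod>j<n. lenc r s (f j)))" .
  qed
  also have "\<dots> = ennreal (a ^ n / fact n * exp (- a) * (\<Sum>f\<in>F. (\<Prod>j<n. lenc r s (f j))))"
  proof -
    have fpos: "0 \<le> (\<Prod>j<n. lenc r s (f j))" if "f \<in> F" for f
      using l0 that by (intro prod_nonneg) (auto simp: F_def PiE_def Pi_def)
    have "(\<Sum>f\<in>F. ennreal (a ^ n / fact n * exp (- a) * (\<Prod>j<n. lenc r s (f j)))) =
        ennreal (\<Sum>f\<in>F. a ^ n / fact n * exp (- a) * (\<Prod>j<n. lenc r s (f j)))"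
      using a fpos by (intro sum_ennreal) auto
    then show ?thesis by (simp add: sum_distrib_left)
  qed
  also have "(\<Sum>f\<in>F. (\<Prod>j<n. lenc r s (f j))) = mS r (lenc r s) n c"
    unfolding mS_def F_def by (rule sum.inter_filter) (auto intro: finite_PiE)
  also have "\<dots> = fact n * (\<Prod>i\<le>r. lenc r s i ^ c i / fact (c i))"
    by (rule mS_eq) (simp add: n_def)
  also have "a ^ n / fact n * exp (- a) * (fact n * (\<Prod>i\<le>r. lenc r s i ^ c i / fact (c i))) =
      (\<Prod>i\<le>r. pz (a * lenc r s i) (c i))"
  proof -
    have "(\<Prod>i\<le>r. pz (a * lenc r s i) (c i)) =
        (\<Prod>i\<le>r. exp (- (a * lenc r s i))) * (\<Prod>i\<le>r. a ^ c i) * (\<Prod>i\<le>r. lenc r s i ^ c i / fact (c i))"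
      by (simp add: pz_def prod.distrib[symmetric] power_mult_distrib mult.assoc)
    also have "(\<Prod>i\<le>r. exp (- (a * lenc r s i))) = exp (- a)"
      using sum_lenc[where r=r and s=s, OF mono] by (simp add: exp_sum[symmetric] sum_negf sum_distrib_left[symmetric])
    also have "(\<Prod>i\<le>r. a ^ c i) = a ^ n" by (simp add: n_def power_sum)
    finally show ?thesis by simp
  qed
  finally show ?thesis .
qed

definition hcount :: "real \<Rightarrow> (nat \<Rightarrow> real) \<Rightarrow> nat" where
  "hcount s \<beta> = card {j. j < cnt \<beta> \<and> posf (\<beta> (Suc j)) \<le> s}"

definition Nc :: "real \<Rightarrow> (nat \<Rightarrow> nat \<Rightarrow> real) \<Rightarrow> nat" where
  "Nc t b = (\<Sum>m<nat \<lceil>t\<rceil>. hcount (t - real m) (b m))"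

definition bs :: "(nat \<Rightarrow> real) \<Rightarrow> nat \<Rightarrow> nat \<Rightarrow> real" where
  "bs t m = (\<lambda>i. t i - real m)"

definition Dc :: "nat \<Rightarrow> (nat \<Rightarrow> real) \<Rightarrow> nat \<Rightarrow> nat \<Rightarrow> (nat \<Rightarrow> nat \<Rightarrow> real) \<Rightarrow> nat" where
  "Dc r t B i b = (\<Sum>m<B. cellc r (bs t m) i (b m))"

abbreviation Mp :: "real \<Rightarrow> (nat \<Rightarrow> nat \<Rightarrow> real) measure" where
  "Mp a \<equiv> PiM UNIV (\<lambda>_::nat. Bl a)"

lemma hcount_meas[measurable]: "hcount s \<in> measurable (Bl a) (count_space UNIV)"
  unfolding hcount_def cnt_def by measurable

lemma Nc_meas[measurable]: "Nc t \<in> measurable (Mp a) (count_space UNIV)"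
  unfolding Nc_def by measurable

lemma Dc_meas[measurable]: "Dc r t B i \<in> measurable (Mp a) (count_space UNIV)"
  unfolding Dc_def by measurable

lemma hcount_nonpos: "s \<le> 0 \<Longrightarrow> hcount s \<beta> = 0"
proof -
  assume s: "s \<le> 0"
  have "\<not> posf v \<le> s" for v using posf_bounds(1)[of v] s by linarith
  then show ?thesis by (simp add: hcount_def)
qed

lemma Nc_ext:
  assumes "0 \<le> t" "t \<le> real B"
  shows "Nc t b = (\<Sum>m<B. hcount (t - real m) (b m))"
  unfolding Nc_def
proof (rule sum.mono_neutral_left)
  show "finite {..<B}" by simp
  show "{..<nat \<lceil>t\<rceil>} \<subseteq> {..<B}" using assms by (auto simp: nat_le_iff ceiling_le_iff)
  show "\<forall>i\<in>{..<B} - {..<nat \<lceil>t\<rceil>}. hcount (t - real i) (b i) = 0"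
    by (auto intro!: hcount_nonpos)
qed

lemma posf_le_iff_lab:
  assumes mono: "\<And>i. Suc i < r \<Longrightarrow> s i \<le> s (Suc i)" and i: "i < r"
  shows "posf v \<le> s i \<longleftrightarrow> lab r s v \<le> i"
proof
  assume "posf v \<le> s i" then show "lab r s v \<le> i" unfolding lab_def by (intro Least_le) simp
next
  assume l: "lab r s v \<le> i"
  have "lab r s v = r \<or> posf v \<le> s (lab r s v)" unfolding lab_def by (rule LeastI[of _ r]) simp
  then have "posf v \<le> s (lab r s v)" using l i by auto
  also have "s (lab r s v) \<le> s i" using l i by (intro mono_upto[where r=r and cum=s, OF mono]) auto
  finally show "posf v \<le> s i" .
qed

lemma hcount_cellc:
  assumes mono: "\<And>i. Suc i < r \<Longrightarrow> s i \<le> s (Suc i)" and i: "i < r"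
  shows "hcount (s i) \<beta> = (\<Sum>i'\<le>i. cellc r s i' \<beta>)"
proof -
  have "hcount (s i) \<beta> = card {j. j < cnt \<beta> \<and> lab r s (\<beta> (Suc j)) \<le> i}"
    unfolding hcount_def using posf_le_iff_lab[where r=r and s=s, OF mono i] by simp
  also have "\<dots> = sum (\<lambda>_. 1::nat) {j \<in> {..<cnt \<beta>}. lab r s (\<beta> (Suc j)) \<le> i}"
    by simp
  also have "\<dots> = (\<Sum>i'\<le>i. sum (\<lambda>_. 1::nat) {j \<in> {j \<in> {..<cnt \<beta>}. lab r s (\<beta> (Suc j)) \<le> i}. lab r s (\<beta> (Suc j)) = i'})"
    by (rule sum.group[symmetric]) auto
  also have "\<dots> = (\<Sum>i'\<le>i. cellc r s i' \<beta>)"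
    by (intro sum.cong refl) (auto simp: cellc_def intro!: arg_cong[where f=card])
  finally show ?thesis .
qed

lemma bs_mono: "(\<And>i. Suc i < r \<Longrightarrow> t i \<le> t (Suc i)) \<Longrightarrow> Suc i < r \<Longrightarrow> bs t m i \<le> bs t m (Suc i)"
  by (simp add: bs_def)

lemma Nc_Dc:
  assumes mono: "\<And>i. Suc i < r \<Longrightarrow> t i \<le> t (Suc i)" and i: "i < r"
    and t0: "0 \<le> t 0" and tB: "t (r - 1) \<le> real B"
  shows "Nc (t i) b = (\<Sum>i'\<le>i. Dc r t B i' b)"
proof -
  have "0 \<le> t i" using mono_upto[where r=r and cum=t, OF mono, of 0 i] t0 i by auto
  moreover have "t i \<le> real B" using mono_upto[where r=r and cum=t, OF mono, of i "r - 1"] tB i by fastforce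
  ultimately have "Nc (t i) b = (\<Sum>m<B. hcount (t i - real m) (b m))" by (rule Nc_ext)
  also have "\<dots> = (\<Sum>m<B. \<Sum>i'\<le>i. cellc r (bs t m) i' (b m))"
  proof (intro sum.cong refl)
    fix m
    have bm: "\<And>i. Suc i < r \<Longrightarrow> bs t m i \<le> bs t m (Suc i)" using mono by (simp add: bs_def)
    show "hcount (t i - real m) (b m) = (\<Sum>i'\<le>i. cellc r (bs t m) i' (b m))"
      using hcount_cellc[where r=r and s="bs t m", OF bm i] by (simp add: bs_def)
  qed
  also have "\<dots> = (\<Sum>i'\<le>i. Dc r t B i' b)"
    unfolding Dc_def by (rule sum.swap)
  finally show ?thesis .
qed

lemma Mp_pps: "a > 0 \<Longrightarrow> product_prob_space (\<lambda>_::nat. Bl a)"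
  unfolding product_prob_space_def product_prob_space_axioms_def product_sigma_finite_def
  using prob_space_Bl prob_space_imp_sigma_finite by blast

lemma space_Mp[simp]: "space (Mp a) = UNIV"
  by (simp add: space_PiM PiE_UNIV_domain)

lemma global_law:
  assumes a: "a > 0" and mono: "\<And>i. Suc i < r \<Longrightarrow> t i \<le> t (Suc i)"
  shows "emeasure (Mp a) {b. \<forall>i\<le>r. Dc r t B i b = d i} =
    ennreal (\<Prod>i\<le>r. pz (\<Sum>m<B. a * lenc r (bs t m) i) (d i))"
proof -
  interpret P: product_prob_space "\<lambda>_::nat. Bl a" "UNIV :: nat set" by (rule Mp_pps[OF a])
  define V where "V n = {v \<in> PiE {..<B} (\<lambda>_. {..n}). (\<Sum>m<B. v m) = n}" for n :: nat
  define Mat where "Mat = PiE {..r} (\<lambda>i. V (d i))"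
  define P where "P C = {b. \<forall>m<B. \<forall>i\<le>r. cellc r (bs t m) i (b m) = C i m}" for C
  define x where "x i m = a * lenc r (bs t m) i" for i m
  have bm: "\<And>m i. Suc i < r \<Longrightarrow> bs t m i \<le> bs t m (Suc i)" using mono by (simp add: bs_def)
  have x0: "i \<le> r \<Longrightarrow> 0 \<le> x i m" for i m
    using a lenc_nonneg[where r=r and s="bs t m", OF bm] by (simp add: x_def)
  have finV: "finite (V n)" for n
    unfolding V_def by (rule finite_subset[of _ "PiE {..<B} (\<lambda>_. {..n})"]) (auto intro: finite_PiE)
  have finMat: "finite Mat" unfolding Mat_def using finV by (intro finite_PiE) auto
  have ev: "{b. \<forall>i\<le>r. Dc r t B i b = d i} = (\<Union>C\<in>Mat. P C)"
  proof (intro set_eqI iffI)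
    fix b assume b: "b \<in> {b. \<forall>i\<le>r. Dc r t B i b = d i}"
    define C where "C = (\<lambda>i\<in>{..r}. \<lambda>m\<in>{..<B}. cellc r (bs t m) i (b m))"
    have "C \<in> Mat"
      unfolding Mat_def
    proof (rule PiE_I)
      fix i assume i: "i \<in> {..r}"
      have s: "(\<Sum>m<B. C i m) = d i" using b i by (simp add: C_def Dc_def)
      have "C i m \<le> d i" if "m < B" for m
        using member_le_sum[of m "{..<B}" "C i"] that s by simp
      then show "C i \<in> V (d i)" using s i by (auto simp: V_def C_def)
    qed (simp add: C_def)
    moreover have "b \<in> P C" by (simp add: P_def C_def)
    ultimately show "b \<in> (\<Union>C\<in>Mat. P C)" by blast
  next
    fix b assume "b \<in> (\<Union>C\<in>Mat. P C)"
    then obtain C where C: "C \<in> Mat" "b \<in> P C" by blast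
    have "Dc r t B i b = d i" if "i \<le> r" for i
    proof -
      have "Dc r t B i b = (\<Sum>m<B. C i m)" using C(2) that by (simp add: P_def Dc_def)
      also have "\<dots> = d i" using C(1) that unfolding Mat_def V_def by (auto simp: PiE_iff)
      finally show ?thesis .
    qed
    then show "b \<in> {b. \<forall>i\<le>r. Dc r t B i b = d i}" by simp
  qed
  have disj: "disjoint_family_on P Mat"
    unfolding disjoint_family_on_def
  proof (intro ballI impI)
    fix C C' assume CC: "C \<in> Mat" "C' \<in> Mat" "C \<noteq> C'"
    then obtain i where i: "C i \<noteq> C' i" by blast
    then have ir: "i \<le> r" using CC by (auto simp: Mat_def PiE_def extensional_def)
    then have "C i \<in> V (d i)" "C' i \<in> V (d i)" using CC by (auto simp: Mat_def)
    then have "C i \<in> extensional {..<B}" "C' i \<in> extensional {..<B}" by (auto simp: V_def PiE_def)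
    then obtain m where m: "C i m \<noteq> C' i m" "m < B" using i extensionalityI[of "C i" "{..<B}" "C' i"] by auto
    show "P C \<inter> P C' = {}" using m ir by (auto simp: P_def)
  qed
  have Pm: "P ` Mat \<subseteq> sets (Mp a)"
  proof -
    have "P C \<in> sets (Mp a)" for C
    proof -
      have "P C = {b \<in> space (Mp a). \<forall>m<B. \<forall>i\<le>r. cellc r (bs t m) i (b m) = C i m}" by (simp add: P_def)
      also have "\<dots> \<in> sets (Mp a)" by measurable
      finally show ?thesis .
    qed
    then show ?thesis by auto
  qed
  have PC: "emeasure (Mp a) (P C) = ennreal (\<Prod>m<B. \<Prod>i\<le>r. pz (x i m) (C i m))" for C
  proof -
    define X where "X m = {\<beta>. \<forall>i\<le>r. cellc r (bs t m) i \<beta> = C i m}" for m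
    have Xm: "X m \<in> sets (Bl a)" for m
    proof -
      have "X m = {\<beta> \<in> space (Bl a). \<forall>i\<le>r. cellc r (bs t m) i \<beta> = C i m}" by (simp add: X_def)
      also have "\<dots> \<in> sets (Bl a)" by measurable
      finally show ?thesis .
    qed
    have "P C = {b \<in> space (Mp a). \<forall>m\<in>{..<B}. b m \<in> X m}" by (auto simp: P_def X_def)
    then have "emeasure (Mp a) (P C) = (\<Prod>m<B. emeasure (Bl a) (X m))"
      using P.emeasure_PiM_Collect[of "{..<B}" X] Xm by simp
    also have "\<dots> = (\<Prod>m<B. ennreal (\<Prod>i\<le>r. pz (x i m) (C i m)))"
    proof (intro prod.cong refl)
      fix m
      show "emeasure (Bl a) (X m) = ennreal (\<Prod>i\<le>r. pz (x i m) (C i m))"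
        unfolding X_def x_def using block_law[where r=r and s="bs t m" and c="\<lambda>i. C i m", OF a bm] by simp
    qed
    also have "\<dots> = ennreal (\<Prod>m<B. \<Prod>i\<le>r. pz (x i m) (C i m))"
      using x0 by (intro prod_ennreal) (auto intro!: prod_nonneg pz_nonneg)
    finally show ?thesis .
  qed
  have "emeasure (Mp a) {b. \<forall>i\<le>r. Dc r t B i b = d i} = (\<Sum>C\<in>Mat. emeasure (Mp a) (P C))"
    unfolding ev by (rule sum_emeasure[symmetric, OF Pm disj finMat])
  also have "\<dots> = (\<Sum>C\<in>Mat. ennreal (\<Prod>i\<le>r. \<Prod>m<B. pz (x i m) (C i m)))"
    unfolding PC by (subst prod.swap) rule
  also have "\<dots> = ennreal (\<Sum>C\<in>Mat. \<Prod>i\<le>r. \<Prod>m<B. pz (x i m) (C i m))"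
    using x0 by (intro sum_ennreal) (auto intro!: prod_nonneg pz_nonneg)
  also have "(\<Sum>C\<in>Mat. \<Prod>i\<le>r. \<Prod>m<B. pz (x i m) (C i m)) = (\<Prod>i\<le>r. \<Sum>v\<in>V (d i). \<Prod>m<B. pz (x i m) (v m))"
    unfolding Mat_def by (rule prod_sum_PiE[symmetric]) (auto intro: finV)
  also have "\<dots> = (\<Prod>i\<le>r. convG (x i) B (d i) (d i))"
  proof (intro prod.cong refl)
    fix i
    show "(\<Sum>v\<in>V (d i). \<Prod>m<B. pz (x i m) (v m)) = convG (x i) B (d i) (d i)"
      unfolding convG_def V_def by (rule sum.inter_filter) (auto intro: finite_PiE)
  qed
  also have "\<dots> = (\<Prod>i\<le>r. pz (\<Sum>m<B. x i m) (d i))"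
  proof (intro prod.cong refl)
    fix i assume "i \<in> {..r}"
    then have "\<And>m. 0 \<le> x i m" using x0 by simp
    then show "convG (x i) B (d i) (d i) = pz (\<Sum>m<B. x i m) (d i)" by (rule convG_eq) simp
  qed
  finally show ?thesis by (simp add: x_def)
qed

lemma clamp_sum: "0 \<le> y \<Longrightarrow> (\<Sum>m<B. clamp (y - real m)) = min y (real B)"
proof (induction B)
  case (Suc B)
  then show ?case by (simp add: clamp_def min_def max_def)
qed simp

definition Lr :: "nat \<Rightarrow> (nat \<Rightarrow> real) \<Rightarrow> nat \<Rightarrow> nat \<Rightarrow> real" where
  "Lr r t B i = (if i = r then real B else t i) - (if i = 0 then 0 else t (i - 1))"

lemma sum_lenc_blocks:
  assumes mono: "\<And>i. Suc i < r \<Longrightarrow> t i \<le> t (Suc i)" and t0: "0 < r \<Longrightarrow> 0 \<le> t 0"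
    and tB: "0 < r \<Longrightarrow> t (r - 1) \<le> real B" and i: "i \<le> r"
  shows "(\<Sum>m<B. lenc r (bs t m) i) = Lr r t B i"
proof -
  have tpos: "0 \<le> t j" if "j < r" for j
    using mono_upto[where r=r and cum=t, OF mono, of 0 j] t0 that by auto
  have tle: "t j \<le> real B" if "j < r" for j
    using mono_upto[where r=r and cum=t, OF mono, of j "r - 1"] tB that by fastforce
  have c1: "(\<Sum>m<B. clamp (t j - real m)) = t j" if "j < r" for j
    using clamp_sum[OF tpos[OF that], of B] tle[OF that] by simp
  have "(\<Sum>m<B. lenc r (bs t m) i) =
      (\<Sum>m<B. (if i = r then 1 else clamp (t i - real m))) - (\<Sum>m<B. (if i = 0 then 0 else clamp (t (i - 1) - real m)))"
    by (simp add: lenc_def bs_def sum_subtractf)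
  also have "\<dots> = Lr r t B i"
    using c1[of i] c1[of "i - 1"] i by (auto simp: Lr_def)
  finally show ?thesis .
qed

lemma pz_sums: "0 \<le> a \<Longrightarrow> pz a sums 1"
proof -
  assume a: "0 \<le> a"
  have "(\<lambda>n. a ^ n / fact n) sums exp a" using exp_converges[of a] by (simp add: divide_inverse mult.commute)
  then have "(\<lambda>n. exp (- a) * (a ^ n / fact n)) sums (exp (- a) * exp a)" by (rule sums_mult)
  moreover have "pz a = (\<lambda>n. exp (- a) * (a ^ n / fact n))" by (auto simp: pz_def fun_eq_iff)
  moreover have "exp (- a) * exp a = 1" by (simp add: exp_minus)
  ultimately show ?thesis by simp
qed

lemma pz_abs_summable: "0 \<le> a \<Longrightarrow> Infinite_Set_Sum.abs_summable_on (pz a) UNIV"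
  using pz_sums[of a] pz_nonneg[of a] by (simp add: abs_summable_on_nat_iff' sums_summable)

lemma pz_infsetsum: "0 \<le> a \<Longrightarrow> infsetsum (pz a) UNIV = 1"
  using pz_sums[of a] pz_abs_summable[of a] by (simp add: infsetsum_nat' sums_iff)

lemma kernel_rowsum:
  assumes lm: "lam > 0" "mu > 0"
  shows "(\<Sum>k\<le>i+1. ucat_kernel lam mu i k) = 1"
proof (cases "i = 0")
  case True
  then show ?thesis by (simp add: ucat_kernel_def)
next
  case False
  have "{..i+1} = {..<i} \<union> {i, i+1}" by auto
  then have "(\<Sum>k\<le>i+1. ucat_kernel lam mu i k) = (\<Sum>k<i. ucat_kernel lam mu i k) + ucat_kernel lam mu i i + ucat_kernel lam mu i (i+1)"
    by (simp add: sum.union_disjoint)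
  also have s1: "(\<Sum>k<i. ucat_kernel lam mu i k) = mu / (lam + mu)"
  proof -
    have "(\<Sum>k<i. ucat_kernel lam mu i k) = (\<Sum>k<i. mu / (real i * (lam + mu)))"
      using False by (intro sum.cong) (auto simp: ucat_kernel_def)
    also have "\<dots> = real i * (mu / (real i * (lam + mu)))" by simp
    also have "\<dots> = mu / (lam + mu)" using False by simp
    finally show ?thesis .
  qed
  also have "ucat_kernel lam mu i i = 0" using False by (simp add: ucat_kernel_def)
  also have "ucat_kernel lam mu i (i+1) = lam / (lam + mu)" using False by (simp add: ucat_kernel_def)
  also have "mu / (lam + mu) + 0 + lam / (lam + mu) = 1" using lm by (simp add: add_divide_distrib[symmetric])
  finally show ?thesis .
qed

lemma kpow_le1:
  assumes lm: "lam > 0" "mu > 0"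
  shows "ucat_kernel_pow lam mu n i j \<le> 1"
proof (induction n arbitrary: i)
  case 0
  then show ?case by simp
next
  case (Suc n)
  have "ucat_kernel_pow lam mu (Suc n) i j = (\<Sum>k\<le>i+1. ucat_kernel lam mu i k * ucat_kernel_pow lam mu n k j)"
    by simp
  also have "\<dots> \<le> (\<Sum>k\<le>i+1. ucat_kernel lam mu i k)"
    using Suc by (intro sum_mono) (simp add: kernel_nonneg[OF lm] mult_left_le)
  also have "\<dots> = 1" by (rule kernel_rowsum[OF lm])
  finally show ?case .
qed

lemma pzK_abs_summable:
  assumes lm: "lam > 0" "mu > 0" and a: "0 \<le> a"
  shows "Infinite_Set_Sum.abs_summable_on (\<lambda>k. pz a k * ucat_kernel_pow lam mu k i j) UNIV"
proof (rule abs_summable_on_comparison_test'[OF pz_abs_summable[OF a]])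
  fix k
  show "norm (pz a k * ucat_kernel_pow lam mu k i j) \<le> pz a k"
    using kpow_le1[OF lm] kpow_nonneg[OF lm] pz_nonneg[OF a]
    by (simp add: abs_mult mult_left_le)
qed

lemma pzK_infsetsum:
  assumes lm: "lam > 0" "mu > 0" and al: "alpha > 0" and t: "0 \<le> t"
  shows "infsetsum (\<lambda>k. pz (alpha * t) k * ucat_kernel_pow lam mu k i j) UNIV = ucat_trans lam mu alpha t i j"
proof -
  have "infsetsum (\<lambda>k. pz (alpha * t) k * ucat_kernel_pow lam mu k i j) UNIV =
      (\<Sum>k. pz (alpha * t) k * ucat_kernel_pow lam mu k i j)"
    using pzK_abs_summable[OF lm, of "alpha * t"] al t by (intro infsetsum_nat') simp
  then show ?thesis by (simp add: ucat_trans_def pz_def)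
qed

lemma Mp_prob: "a > 0 \<Longrightarrow> prob_space (Mp a)"
  by (intro prob_space_PiM prob_space_Bl)

lemma Q_fdd:
  assumes lm: "lam > 0" "mu > 0" and al: "alpha > 0" and r: "0 < r"
    and mono: "\<And>i. Suc i < r \<Longrightarrow> ts i \<le> ts (Suc i)" and t0: "0 \<le> ts 0"
  shows "emeasure (Mc \<Otimes>\<^sub>M Mp alpha) {p \<in> space (Mc \<Otimes>\<^sub>M Mp alpha). \<forall>i<r. eta lam mu x (fst p) (Nc (ts i) (snd p)) = ks i} =
    ennreal (\<Prod>i<r. ucat_trans lam mu alpha (ts i - (if i = 0 then 0 else ts (i - 1)))
                   (if i = 0 then x else ks (i - 1)) (ks i))"
proof -
  interpret Pp: prob_space "Mp alpha" by (rule Mp_prob[OF al])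
  define B where "B = nat \<lceil>ts (r - 1)\<rceil>"
  have tB: "ts (r - 1) \<le> real B" unfolding B_def by linarith
  define Dset where "Dset = PiE {..r} (\<lambda>_. UNIV :: nat set)"
  define cum where "cum d i = (\<Sum>i'\<le>i. d i')" for d :: "nat \<Rightarrow> nat" and i
  define A where "A d = {a. \<forall>i<r. eta lam mu x a (cum d i) = ks i}" for d
  define Bd where "Bd d = {b. \<forall>i\<le>r. Dc r ts B i b = d i}" for d
  define E where "E = {p \<in> space (Mc \<Otimes>\<^sub>M Mp alpha). \<forall>i<r. eta lam mu x (fst p) (Nc (ts i) (snd p)) = ks i}"
  define L where "L i = Lr r ts B i" for i
  define g where "g i k = pz (alpha * L i) k * (if i < r then ucat_kernel_pow lam mu k (if i = 0 then x else ks (i - 1)) (ks i) else 1)" for i k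
  have NcD: "Nc (ts i) b = (\<Sum>i'\<le>i. Dc r ts B i' b)" if "i < r" for i b
    by (rule Nc_Dc[OF mono that t0 tB])
  have tpos: "0 \<le> ts j" if "j < r" for j
    using mono_upto[where r=r and cum=ts, OF mono, of 0 j] t0 that by auto
  have L0: "0 \<le> L i" if "i \<le> r" for i
  proof (cases "i = r")
    case True
    then show ?thesis using tB r by (auto simp: L_def Lr_def)
  next
    case False
    then show ?thesis using that tpos[of i] mono[of "i - 1"] by (auto simp: L_def Lr_def)
  qed
  have ev: "E = (\<Union>d\<in>Dset. A d \<times> Bd d)"
  proof (intro set_eqI iffI)
    fix p assume p: "p \<in> E"
    obtain a b where ab: "p = (a, b)" by fastforce
    define d where "d = (\<lambda>i\<in>{..r}. Dc r ts B i b)"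
    have "d \<in> Dset" by (simp add: d_def Dset_def)
    moreover have "a \<in> A d"
    proof -
      have "cum d i = Nc (ts i) b" if "i < r" for i
        using that NcD[of i b] by (simp add: cum_def d_def)
      then show ?thesis using p ab by (simp add: A_def E_def)
    qed
    moreover have "b \<in> Bd d" by (simp add: Bd_def d_def)
    ultimately show "p \<in> (\<Union>d\<in>Dset. A d \<times> Bd d)" using ab by blast
  next
    fix p assume "p \<in> (\<Union>d\<in>Dset. A d \<times> Bd d)"
    then obtain d a b where d: "d \<in> Dset" "a \<in> A d" "b \<in> Bd d" and ab: "p = (a, b)" by blast
    have "Nc (ts i) b = cum d i" if "i < r" for i
      using that NcD[of i b] d(3) by (simp add: cum_def Bd_def)
    then show "p \<in> E" using d(2) ab by (simp add: A_def E_def space_pair_measure)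
  qed
  have disj: "disjoint_family_on (\<lambda>d. A d \<times> Bd d) Dset"
    unfolding disjoint_family_on_def
  proof (intro ballI impI)
    fix d d' assume dd: "d \<in> Dset" "d' \<in> Dset" "d \<noteq> d'"
    then obtain i where i: "d i \<noteq> d' i" by blast
    then have "i \<le> r" using dd by (auto simp: Dset_def PiE_def extensional_def)
    then have "Bd d \<inter> Bd d' = {}" using i by (auto simp: Bd_def)
    then show "A d \<times> Bd d \<inter> A d' \<times> Bd d' = {}" by auto
  qed
  have Am: "A d \<in> sets Mc" for d unfolding A_def by (rule sets_Mc_Collect) measurable
  have Bm: "Bd d \<in> sets (Mp alpha)" for d
  proof -
    have "Bd d = {b \<in> space (Mp alpha). \<forall>i\<le>r. Dc r ts B i b = d i}" by (simp add: Bd_def)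
    also have "\<dots> \<in> sets (Mp alpha)" by measurable
    finally show ?thesis .
  qed
  have cD: "countable Dset" unfolding Dset_def by (intro countable_PiE) auto
  have "emeasure (Mc \<Otimes>\<^sub>M Mp alpha) E = (\<integral>\<^sup>+d. emeasure (Mc \<Otimes>\<^sub>M Mp alpha) (A d \<times> Bd d) \<partial>count_space Dset)"
    unfolding ev by (rule emeasure_UN_countable[OF _ cD disj]) (use Am Bm in auto)
  also have "\<dots> = (\<integral>\<^sup>+d. ennreal (\<Prod>i\<le>r. g i (d i)) \<partial>count_space Dset)"
  proof (rule nn_integral_cong)
    fix d assume "d \<in> space (count_space Dset)"
    have cm: "\<And>i. Suc i < r \<Longrightarrow> cum d i \<le> cum d (Suc i)" by (simp add: cum_def)
    have "emeasure (Mc \<Otimes>\<^sub>M Mp alpha) (A d \<times> Bd d) = emeasure Mc (A d) * emeasure (Mp alpha) (Bd d)"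
      by (rule Pp.emeasure_pair_measure_Times[OF Am Bm])
    also have "emeasure Mc (A d) = ennreal (\<Prod>i<r. ucat_kernel_pow lam mu (d i) (if i = 0 then x else ks (i - 1)) (ks i))"
    proof -
      have "emeasure Mc (A d) = ennreal (\<Prod>i<r. ucat_kernel_pow lam mu (cum d i - (if i = 0 then 0 else cum d (i - 1)))
                       (if i = 0 then x else ks (i - 1)) (ks i))"
        unfolding A_def by (rule chain_fdd[where r=r and cum="cum d", OF lm cm])
      also have "(\<Prod>i<r. ucat_kernel_pow lam mu (cum d i - (if i = 0 then 0 else cum d (i - 1)))
                       (if i = 0 then x else ks (i - 1)) (ks i)) =
                 (\<Prod>i<r. ucat_kernel_pow lam mu (d i) (if i = 0 then x else ks (i - 1)) (ks i))"
      proof (intro prod.cong refl)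
        fix i
        have "cum d i - (if i = 0 then 0 else cum d (i - 1)) = d i"
          by (cases i) (simp_all add: cum_def)
        then show "ucat_kernel_pow lam mu (cum d i - (if i = 0 then 0 else cum d (i - 1))) (if i = 0 then x else ks (i - 1)) (ks i)
          = ucat_kernel_pow lam mu (d i) (if i = 0 then x else ks (i - 1)) (ks i)" by simp
      qed
      finally show ?thesis .
    qed
    also have "emeasure (Mp alpha) (Bd d) = ennreal (\<Prod>i\<le>r. pz (alpha * L i) (d i))"
    proof -
      have "emeasure (Mp alpha) (Bd d) = ennreal (\<Prod>i\<le>r. pz (\<Sum>m<B. alpha * lenc r (bs ts m) i) (d i))"
        unfolding Bd_def by (rule global_law[where r=r and t=ts, OF al mono])
      also have "(\<Prod>i\<le>r. pz (\<Sum>m<B. alpha * lenc r (bs ts m) i) (d i)) = (\<Prod>i\<le>r. pz (alpha * L i) (d i))"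
      proof (intro prod.cong refl)
        fix i assume "i \<in> {..r}"
        then have "(\<Sum>m<B. lenc r (bs ts m) i) = L i"
          unfolding L_def using t0 tB by (intro sum_lenc_blocks[where r=r and t=ts, OF mono]) auto
        then show "pz (\<Sum>m<B. alpha * lenc r (bs ts m) i) (d i) = pz (alpha * L i) (d i)"
          by (simp add: sum_distrib_left[symmetric])
      qed
      finally show ?thesis .
    qed
    also have "ennreal (\<Prod>i<r. ucat_kernel_pow lam mu (d i) (if i = 0 then x else ks (i - 1)) (ks i)) *
        ennreal (\<Prod>i\<le>r. pz (alpha * L i) (d i)) = ennreal (\<Prod>i\<le>r. g i (d i))"
    proof -
      have "(\<Prod>i\<le>r. g i (d i)) = (\<Prod>i\<le>r. (if i < r then ucat_kernel_pow lam mu (d i) (if i = 0 then x else ks (i - 1)) (ks i) else 1)) *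
          (\<Prod>i\<le>r. pz (alpha * L i) (d i))"
        by (simp add: g_def prod.distrib mult.commute)
      also have "(\<Prod>i\<le>r. (if i < r then ucat_kernel_pow lam mu (d i) (if i = 0 then x else ks (i - 1)) (ks i) else 1)) =
          (\<Prod>i<r. ucat_kernel_pow lam mu (d i) (if i = 0 then x else ks (i - 1)) (ks i))"
        by (simp add: lessThan_Suc_atMost[symmetric])
      moreover have "0 \<le> (\<Prod>i<r. ucat_kernel_pow lam mu (d i) (if i = 0 then x else ks (i - 1)) (ks i))"
        by (intro prod_nonneg) (simp add: kpow_nonneg[OF lm])
      ultimately show ?thesis by (simp add: ennreal_mult'[symmetric])
    qed
    finally show "emeasure (Mc \<Otimes>\<^sub>M Mp alpha) (A d \<times> Bd d) = ennreal (\<Prod>i\<le>r. g i (d i))" .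
  qed
  also have "\<dots> = ennreal (infsetsum (\<lambda>d. \<Prod>i\<le>r. g i (d i)) Dset)"
  proof (rule nn_integral_conv_infsetsum)
    show "Infinite_Set_Sum.abs_summable_on (\<lambda>d. \<Prod>i\<le>r. g i (d i)) Dset"
      unfolding Dset_def
    proof (rule abs_summable_on_prod_PiE)
      fix i assume i: "i \<in> {..r}"
      show "Infinite_Set_Sum.abs_summable_on (g i) UNIV"
      proof (cases "i < r")
        case True
        then have "g i = (\<lambda>k. pz (alpha * L i) k * ucat_kernel_pow lam mu k (if i = 0 then x else ks (i - 1)) (ks i))"
          by (simp add: g_def fun_eq_iff)
        then show ?thesis using L0 i al by (simp only:) (rule pzK_abs_summable[OF lm], simp)
      next
        case False
        then show ?thesis unfolding g_def using pz_abs_summable[of "alpha * L i"] L0 i al by simp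
      qed
    qed auto
    show "\<And>d. d \<in> Dset \<Longrightarrow> 0 \<le> (\<Prod>i\<le>r. g i (d i))"
      using L0 al kpow_nonneg[OF lm] by (auto simp: g_def intro!: prod_nonneg mult_nonneg_nonneg pz_nonneg)
  qed
  also have "infsetsum (\<lambda>d. \<Prod>i\<le>r. g i (d i)) Dset = (\<Prod>i\<le>r. infsetsum (g i) UNIV)"
    unfolding Dset_def
  proof (rule infsetsum_prod_PiE)
    fix i assume i: "i \<in> {..r}"
    show "Infinite_Set_Sum.abs_summable_on (g i) UNIV"
    proof (cases "i < r")
      case True
      then have "g i = (\<lambda>k. pz (alpha * L i) k * ucat_kernel_pow lam mu k (if i = 0 then x else ks (i - 1)) (ks i))"
        by (simp add: g_def fun_eq_iff)
      then show ?thesis using L0 i al by (simp only:) (rule pzK_abs_summable[OF lm], simp)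
    next
      case False
      then show ?thesis unfolding g_def using pz_abs_summable[of "alpha * L i"] L0 i al by simp
    qed
  qed auto
  also have "\<dots> = (\<Prod>i<r. ucat_trans lam mu alpha (ts i - (if i = 0 then 0 else ts (i - 1)))
                   (if i = 0 then x else ks (i - 1)) (ks i))"
  proof -
    have "(\<Prod>i\<le>r. infsetsum (g i) UNIV) = (\<Prod>i<r. infsetsum (g i) UNIV) * infsetsum (g r) UNIV"
      by (simp add: lessThan_Suc_atMost[symmetric])
    also have "infsetsum (g r) UNIV = 1"
      unfolding g_def using pz_infsetsum[of "alpha * L r"] L0[of r] al by simp
    also have "(\<Prod>i<r. infsetsum (g i) UNIV) = (\<Prod>i<r. ucat_trans lam mu alpha (ts i - (if i = 0 then 0 else ts (i - 1)))
                   (if i = 0 then x else ks (i - 1)) (ks i))"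
    proof (intro prod.cong refl)
      fix i assume i: "i \<in> {..<r}"
      have Li: "L i = ts i - (if i = 0 then 0 else ts (i - 1))" using i by (simp add: L_def Lr_def)
      have "0 \<le> L i" using L0 i by simp
      then show "infsetsum (g i) UNIV = ucat_trans lam mu alpha (ts i - (if i = 0 then 0 else ts (i - 1)))
                   (if i = 0 then x else ks (i - 1)) (ks i)"
      proof -
        have "g i = (\<lambda>k. pz (alpha * L i) k * ucat_kernel_pow lam mu k (if i = 0 then x else ks (i - 1)) (ks i))"
          using i by (simp add: g_def fun_eq_iff)
        then show ?thesis unfolding Li[symmetric] using pzK_infsetsum[OF lm al \<open>0 \<le> L i\<close>] by simp
      qed
    qed
    finally show ?thesis by simp
  qed
  finally show ?thesis unfolding E_def .
qed

definition enc :: "(nat \<Rightarrow> real) \<times> (nat \<Rightarrow> nat \<Rightarrow> real) \<Rightarrow> nat \<Rightarrow> real" where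
  "enc p = (\<lambda>n. if even n then fst p (n div 2)
               else snd p (fst (prod_decode (n div 2))) (snd (prod_decode (n div 2))))"

definition dec :: "(nat \<Rightarrow> real) \<Rightarrow> (nat \<Rightarrow> real) \<times> (nat \<Rightarrow> nat \<Rightarrow> real)" where
  "dec \<omega> = (\<lambda>k. \<omega> (2 * k), \<lambda>m j. \<omega> (2 * prod_encode (m, j) + 1))"

definition MM :: "real \<Rightarrow> (nat \<Rightarrow> real) measure" where
  "MM alpha = distr (Mc \<Otimes>\<^sub>M Mp alpha) (PiM UNIV (\<lambda>_::nat. borel::real measure)) enc"

definition XX :: "real \<Rightarrow> real \<Rightarrow> nat \<Rightarrow> real \<Rightarrow> (nat \<Rightarrow> real) \<Rightarrow> nat" where
  "XX lam mu x t \<omega> = eta lam mu x (fst (dec \<omega>)) (Nc t (snd (dec \<omega>)))"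

lemma dec_enc: "dec (enc p) = p"
proof -
  have "fst (dec (enc p)) = fst p" by (auto simp: dec_def enc_def fun_eq_iff)
  moreover have "snd (dec (enc p)) = snd p" by (auto simp: dec_def enc_def fun_eq_iff)
  ultimately show ?thesis by (simp add: prod_eq_iff)
qed

lemma sets_Mc_cong: "sets Mc = sets (PiM UNIV (\<lambda>_::nat. borel::real measure))"
  by (rule sets_PiM_cong) auto

lemma sets_Mp_cong: "sets (Mp a) = sets (PiM UNIV (\<lambda>_::nat. PiM UNIV (\<lambda>_::nat. borel::real measure)))"
  by (rule sets_PiM_cong) (auto simp: sets_Bl)

lemma enc_meas: "enc \<in> measurable (Mc \<Otimes>\<^sub>M Mp a) (PiM UNIV (\<lambda>_::nat. borel::real measure))"
  unfolding enc_def
proof (rule measurable_PiM_single')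
  fix n :: nat
  show "(\<lambda>p. if even n then fst p (n div 2) else snd p (fst (prod_decode (n div 2))) (snd (prod_decode (n div 2))))
     \<in> measurable (Mc \<Otimes>\<^sub>M Mp a) borel"
  proof (cases "even n")
    case True
    have "(\<lambda>p. fst p (n div 2)) \<in> measurable (Mc \<Otimes>\<^sub>M Mp a) borel"
      by (rule measurable_compose[OF measurable_fst]) (simp add: measurable_cong_sets[OF sets_Mc_cong refl])
    then show ?thesis using True by simp
  next
    case False
    have "(\<lambda>p. snd p (fst (prod_decode (n div 2))) (snd (prod_decode (n div 2)))) \<in> measurable (Mc \<Otimes>\<^sub>M Mp a) borel"
    proof (rule measurable_compose[OF measurable_snd])
      have "(\<lambda>a. a (fst (prod_decode (n div 2))) (snd (prod_decode (n div 2)))) \<in>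
          measurable (PiM UNIV (\<lambda>_::nat. PiM UNIV (\<lambda>_::nat. borel::real measure))) borel"
      proof -
        define m j where "m = fst (prod_decode (n div 2))" and "j = snd (prod_decode (n div 2))"
        have c1: "(\<lambda>a. a m) \<in> measurable (PiM UNIV (\<lambda>_::nat. PiM UNIV (\<lambda>_::nat. borel::real measure))) (PiM UNIV (\<lambda>_::nat. borel::real measure))"
          by (rule measurable_component_singleton) simp
        have c2: "(\<lambda>f. f j) \<in> measurable (PiM UNIV (\<lambda>_::nat. borel::real measure)) borel"
          by (rule measurable_component_singleton) simp
        show ?thesis using measurable_compose[OF c1 c2] by (simp add: m_def j_def)
      qed
      then show "(\<lambda>a. a (fst (prod_decode (n div 2))) (snd (prod_decode (n div 2)))) \<in> measurable (Mp a) borel"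
        by (simp add: measurable_cong_sets[OF sets_Mp_cong refl])
    qed
    then show ?thesis using False by simp
  qed
qed (auto simp: space_pair_measure)

lemma dec_meas: "dec \<in> measurable (PiM UNIV (\<lambda>_::nat. borel::real measure)) (Mc \<Otimes>\<^sub>M Mp a)"
  unfolding dec_def
proof (rule measurable_Pair)
  show "(\<lambda>\<omega>. \<lambda>k. \<omega> (2 * k)) \<in> measurable (PiM UNIV (\<lambda>_::nat. borel::real measure)) Mc"
    unfolding measurable_cong_sets[OF refl sets_Mc_cong]
    by (rule measurable_PiM_single') (auto simp: space_PiM)
  show "(\<lambda>\<omega>. \<lambda>m j. \<omega> (2 * prod_encode (m, j) + 1)) \<in> measurable (PiM UNIV (\<lambda>_::nat. borel::real measure)) (Mp a)"
    unfolding measurable_cong_sets[OF refl sets_Mp_cong]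
  proof (rule measurable_PiM_single')
    fix m
    show "(\<lambda>\<omega> j. \<omega> (2 * prod_encode (m, j) + 1)) \<in> measurable (PiM UNIV (\<lambda>_::nat. borel::real measure)) (PiM UNIV (\<lambda>_::nat. borel::real measure))"
      by (rule measurable_PiM_single') (auto simp: space_PiM)
  qed (auto simp: space_PiM)
qed

lemma Y_meas: "(\<lambda>p. eta lam mu x (fst p) (Nc t (snd p))) \<in> measurable (Mc \<Otimes>\<^sub>M Mp a) (count_space UNIV)"
  by (rule measurable_compose_countable'[where I=UNIV and g="\<lambda>p. Nc t (snd p)"]) auto

lemma sets_MM[simp]: "sets (MM a) = sets (PiM UNIV (\<lambda>_::nat. borel::real measure))"
  by (simp add: MM_def)

lemma space_MM[simp]: "space (MM a) = UNIV"
  by (simp add: MM_def space_PiM PiE_UNIV_domain)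

lemma XX_meas: "XX lam mu x t \<in> measurable (MM a) (count_space UNIV)"
proof -
  have "(\<lambda>\<omega>. (\<lambda>p. eta lam mu x (fst p) (Nc t (snd p))) (dec \<omega>)) \<in> measurable (PiM UNIV (\<lambda>_::nat. borel::real measure)) (count_space UNIV)"
    by (rule measurable_compose[OF dec_meas Y_meas])
  moreover have "XX lam mu x t = (\<lambda>\<omega>. (\<lambda>p. eta lam mu x (fst p) (Nc t (snd p))) (dec \<omega>))"
    by (simp add: fun_eq_iff XX_def)
  ultimately show ?thesis by (simp add: measurable_cong_sets[OF sets_MM refl])
qed

lemma Q_prob: "a > 0 \<Longrightarrow> prob_space (Mc \<Otimes>\<^sub>M Mp a)"
proof -
  assume a: "a > 0"
  interpret M1: prob_space Mc by (rule prob_space_Mc)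
  interpret M2: prob_space "Mp a" by (rule Mp_prob[OF a])
  interpret pair_prob_space Mc "Mp a" by unfold_locales
  show ?thesis by unfold_locales
qed

lemma MM_prob: "a > 0 \<Longrightarrow> prob_space (MM a)"
  unfolding MM_def by (intro prob_space.prob_space_distr Q_prob enc_meas)

lemma ucat_trans_nonneg:
  assumes lm: "lam > 0" "mu > 0" and al: "alpha > 0" and t: "0 \<le> t"
  shows "0 \<le> ucat_trans lam mu alpha t i j"
  unfolding pzK_infsetsum[OF lm al t, symmetric]
  using al t by (intro infsetsum_nonneg mult_nonneg_nonneg pz_nonneg kpow_nonneg[OF lm]) auto

lemma XX_process:
  assumes lm: "lam > 0" "mu > 0" and al: "alpha > 0"
  shows "ucat_process lam mu alpha x (MM alpha) (XX lam mu x)"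
  unfolding ucat_process_def
proof (intro conjI allI impI)
  fix t :: real
  show "XX lam mu x t \<in> measurable (MM alpha) (count_space UNIV)" by (rule XX_meas)
next
  fix n :: nat and ts :: "nat \<Rightarrow> real" and ks :: "nat \<Rightarrow> nat"
  assume h: "(0 < n \<longrightarrow> 0 \<le> ts 0) \<and> (\<forall>i. Suc i < n \<longrightarrow> ts i \<le> ts (Suc i))"
  interpret MMp: prob_space "MM alpha" by (rule MM_prob[OF al])
  show "measure (MM alpha) {\<omega> \<in> space (MM alpha). \<forall>i<n. XX lam mu x (ts i) \<omega> = ks i} =
    (\<Prod>i<n. ucat_trans lam mu alpha (ts i - (if i = 0 then 0 else ts (i - 1)))
                     (if i = 0 then x else ks (i - 1)) (ks i))"
  proof (cases "n = 0")
    case True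
    then show ?thesis using MMp.prob_space by simp
  next
    case False
    then have n: "0 < n" by simp
    have mono: "\<And>i. Suc i < n \<Longrightarrow> ts i \<le> ts (Suc i)" using h by auto
    have t0: "0 \<le> ts 0" using h n by auto
    define S where "S = {\<omega> \<in> space (MM alpha). \<forall>i<n. XX lam mu x (ts i) \<omega> = ks i}"
    have Sm: "S \<in> sets (PiM UNIV (\<lambda>_::nat. borel::real measure))"
    proof -
      have "S \<in> sets (MM alpha)" unfolding S_def using XX_meas[of lam mu x _ alpha] by measurable
      then show ?thesis by simp
    qed
    have pre: "enc -` S \<inter> space (Mc \<Otimes>\<^sub>M Mp alpha) =
        {p \<in> space (Mc \<Otimes>\<^sub>M Mp alpha). \<forall>i<n. eta lam mu x (fst p) (Nc (ts i) (snd p)) = ks i}"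
      by (auto simp: S_def XX_def dec_enc)
    have "emeasure (MM alpha) S = emeasure (Mc \<Otimes>\<^sub>M Mp alpha) (enc -` S \<inter> space (Mc \<Otimes>\<^sub>M Mp alpha))"
      unfolding MM_def by (rule emeasure_distr[OF enc_meas Sm])
    also have "\<dots> = ennreal (\<Prod>i<n. ucat_trans lam mu alpha (ts i - (if i = 0 then 0 else ts (i - 1)))
                     (if i = 0 then x else ks (i - 1)) (ks i))"
      unfolding pre by (rule Q_fdd[OF lm al n mono t0])
    finally have e: "emeasure (MM alpha) S = ennreal (\<Prod>i<n. ucat_trans lam mu alpha (ts i - (if i = 0 then 0 else ts (i - 1)))
                     (if i = 0 then x else ks (i - 1)) (ks i))" .
    have nn: "0 \<le> (\<Prod>i<n. ucat_trans lam mu alpha (ts i - (if i = 0 then 0 else ts (i - 1)))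
                     (if i = 0 then x else ks (i - 1)) (ks i))"
    proof (intro prod_nonneg ballI)
      fix i assume i: "i \<in> {..<n}"
      have "0 \<le> ts i - (if i = 0 then 0 else ts (i - 1))"
        using t0 mono[of "i - 1"] i by (cases "i = 0") auto
      then show "0 \<le> ucat_trans lam mu alpha (ts i - (if i = 0 then 0 else ts (i - 1))) (if i = 0 then x else ks (i - 1)) (ks i)"
        by (rule ucat_trans_nonneg[OF lm al])
    qed
    show ?thesis using e nn unfolding S_def[symmetric] by (simp add: measure_def)
  qed
qed

theorem main:
  fixes lam mu alpha :: real and x y :: nat
  assumes "lam > 0" and "mu > 0" and "alpha > 0"
  shows "\<exists>(M :: (nat \<Rightarrow> real) measure) Xt Xh.
           prob_space M \<and>
           ucat_process lam mu alpha x M Xt \<and>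
           ucat_process lam mu alpha y M Xh \<and>
           (AE \<omega> in M. \<forall>t\<ge>0. \<bar>int (Xt t \<omega>) - int (Xh t \<omega>)\<bar> \<le> \<bar>int x - int y\<bar>)"
proof (intro exI conjI)
  show "prob_space (MM alpha)" by (rule MM_prob[OF assms(3)])
  show "ucat_process lam mu alpha x (MM alpha) (XX lam mu x)" by (rule XX_process[OF assms])
  show "ucat_process lam mu alpha y (MM alpha) (XX lam mu y)" by (rule XX_process[OF assms])
  show "AE \<omega> in MM alpha. \<forall>t\<ge>0. \<bar>int (XX lam mu x t \<omega>) - int (XX lam mu y t \<omega>)\<bar> \<le> \<bar>int x - int y\<bar>"
    by (intro AE_I2 allI impI) (simp add: XX_def eta_coupling[OF assms(1,2)])
qed

theorem lemma4p4:
  fixes lam mu alpha :: real and x y :: nat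
  assumes "lam > 0" and "mu > 0" and "alpha > 0"
  shows "\<exists>(M :: (nat \<Rightarrow> real) measure) Xt Xh.
           prob_space M \<and>
           ucat_process lam mu alpha x M Xt \<and>
           ucat_process lam mu alpha y M Xh \<and>
           (AE \<omega> in M. \<forall>t\<ge>0. \<bar>int (Xt t \<omega>) - int (Xh t \<omega>)\<bar> \<le> \<bar>int x - int y\<bar>)"
  by (rule main[OF assms])

end
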